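(* Let $k\ge2$ be a constant integer. There are constants $c,c'>0$ such that for all sufficiently large $n$, with probability at least $c'\,n^{1/k-k}$ the random $k$-tree $G(n)$ has an $s$-barrier with $s\ge c\,n^{1-1/k}$.
   Context: Random $k$-tree process: $G(0)$ is a clique on $k$ vertices; for $t\ge1$, $G(t)$ is obtained from $G(t-1)$ by choosing a $k$-clique of $G(t-1)$ uniformly at random, creating a new vertex, and joining it to all vertices of the chosen clique. An $s$-barrier in a connected graph is a pair $\{C_1,C_2\}$ of vertex-disjoint $k$-cliques such that (i) deleting all edges between $C_1$ and $C_2$ disconnects the graph, and (ii) every vertex of $V(C_1)\cup V(C_2)$ has degree at least $s$. *)

theory Defs
  imports "HOL-Probability.Probability"
begin

text \<open>Graphs on vertex set V :: nat set, with edge set E a set of 2-element vertex sets.\<close>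

definition is_clique :: "nat \<Rightarrow> nat set \<Rightarrow> nat set set \<Rightarrow> nat set \<Rightarrow> bool" where
  "is_clique k V E C \<longleftrightarrow> C \<subseteq> V \<and> finite C \<and> card C = k \<and>
     (\<forall>u\<in>C. \<forall>v\<in>C. u \<noteq> v \<longrightarrow> {u, v} \<in> E)"

definition kcliques :: "nat \<Rightarrow> nat set \<Rightarrow> nat set set \<Rightarrow> nat set set" where
  "kcliques k V E = {C. is_clique k V E C}"

definition complete_edges :: "nat set \<Rightarrow> nat set set" where
  "complete_edges C = {{u, v} | u v. u \<in> C \<and> v \<in> C \<and> u \<noteq> v}"

text \<open>Random k-tree process: G(t) has vertex set {..<k+t}; the vertex added at step t+1 is k+t.
  The distribution of the edge set of G(t).\<close>
fun ktree :: "nat \<Rightarrow> nat \<Rightarrow> nat set set pmf" where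
  "ktree k 0 = return_pmf (complete_edges {..<k})"
| "ktree k (Suc t) = bind_pmf (ktree k t) (\<lambda>E.
     map_pmf (\<lambda>C. E \<union> {{k + t, u} | u. u \<in> C})
             (pmf_of_set (kcliques k {..<k + t} E)))"

definition ktree_vertices :: "nat \<Rightarrow> nat \<Rightarrow> nat set" where
  "ktree_vertices k t = {..<k + t}"

definition graph_connected :: "nat set \<Rightarrow> nat set set \<Rightarrow> bool" where
  "graph_connected V E \<longleftrightarrow>
     (\<forall>u\<in>V. \<forall>v\<in>V. (\<lambda>x y. x \<in> V \<and> y \<in> V \<and> {x, y} \<in> E)\<^sup>*\<^sup>* u v)"

definition degree :: "nat set \<Rightarrow> nat set set \<Rightarrow> nat \<Rightarrow> nat" where
  "degree V E u = card {v \<in> V. v \<noteq> u \<and> {u, v} \<in> E}"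

definition is_barrier :: "nat \<Rightarrow> nat \<Rightarrow> nat set \<Rightarrow> nat set set \<Rightarrow> nat set \<Rightarrow> nat set \<Rightarrow> bool" where
  "is_barrier k s V E C1 C2 \<longleftrightarrow>
     is_clique k V E C1 \<and> is_clique k V E C2 \<and> C1 \<inter> C2 = {} \<and>
     \<not> graph_connected V (E - {{u, v} | u v. u \<in> C1 \<and> v \<in> C2}) \<and>
     (\<forall>u \<in> C1 \<union> C2. degree V E u \<ge> s)"

definition has_barrier :: "nat \<Rightarrow> nat \<Rightarrow> nat set \<Rightarrow> nat set set \<Rightarrow> bool" where
  "has_barrier k s V E \<longleftrightarrow> (\<exists>C1 C2. is_barrier k s V E C1 C2)"

end

theory Submission
  imports Defs
begin

definition stp :: "nat \<Rightarrow> nat \<Rightarrow> nat set set \<Rightarrow> nat set \<Rightarrow> nat set set" where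
  "stp k t E C = E \<union> {{k+t,u}|u. u\<in>C}"

definition newc :: "nat \<Rightarrow> nat \<Rightarrow> nat set \<Rightarrow> nat set set" where
  "newc k t C = (\<lambda>u. insert (k+t) (C - {u})) ` C"

definition KC :: "nat \<Rightarrow> nat \<Rightarrow> nat set set \<Rightarrow> nat set set" where
  "KC k t E = kcliques k {..<k+t} E"

definition ebound :: "nat \<Rightarrow> nat \<Rightarrow> nat set set \<Rightarrow> bool" where
  "ebound k t E \<longleftrightarrow> (\<forall>e\<in>E. e \<subseteq> {..<k+t})"

lemma ktree_Suc: "ktree k (Suc t) = bind_pmf (ktree k t) (\<lambda>E. map_pmf (stp k t E) (pmf_of_set (KC k t E)))"
  by (simp add: stp_def[abs_def] KC_def)

lemma KC_sub: "C \<in> KC k t E \<Longrightarrow> C \<subseteq> {..<k+t} \<and> finite C \<and> card C = k"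
  unfolding KC_def kcliques_def is_clique_def by auto

lemma ebound_stp: "ebound k t E \<Longrightarrow> C \<in> KC k t E \<Longrightarrow> ebound k (Suc t) (stp k t E C)"
  unfolding ebound_def
proof
  fix e assume eb: "\<forall>e\<in>E. e \<subseteq> {..<k + t}" and C: "C \<in> KC k t E" and e: "e \<in> stp k t E C"
  have "C \<subseteq> {..<k+t}" using KC_sub[OF C] by auto
  show "e \<subseteq> {..<k + Suc t}"
  proof (cases "e \<in> E")
    case True thus ?thesis using eb by fastforce
  next
    case False thus ?thesis using e \<open>C \<subseteq> {..<k+t}\<close> unfolding stp_def by auto
  qed
qed


lemma is_clique_mono: "is_clique k V E C \<Longrightarrow> V \<subseteq> V' \<Longrightarrow> E \<subseteq> E' \<Longrightarrow> is_clique k V' E' C"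
  unfolding is_clique_def by auto

lemma subset_card_minus_one:
  assumes "finite C" "A \<subseteq> C" "card A + 1 = card C"
  shows "\<exists>u\<in>C. A = C - {u}"
proof -
  have "C - A \<noteq> {}" using assms by (metis Diff_eq_empty_iff card_mono finite_subset le_add1 add_le_same_cancel1 le_antisym not_one_le_zero subset_antisym) 
  then obtain u where u: "u \<in> C" "u \<notin> A" by blast
  have "A \<subseteq> C - {u}" using u assms by auto
  moreover have "card (C - {u}) = card A" using u assms by simp
  ultimately have "A = C - {u}" using assms by (metis card_subset_eq finite_Diff)
  thus ?thesis using u by blast
qed

lemma KC_stp:
  assumes eb: "ebound k t E" and C: "C \<in> KC k t E"
  shows "KC k (Suc t) (stp k t E C) = KC k t E \<union> newc k t C"
proof -
  let ?w = "k+t"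
  have Cs: "C \<subseteq> {..<k+t}" "finite C" "card C = k" using KC_sub[OF C] by auto
  have wC: "?w \<notin> C" using Cs by auto
  have Ccl: "\<forall>u\<in>C. \<forall>v\<in>C. u \<noteq> v \<longrightarrow> {u, v} \<in> E" using C unfolding KC_def kcliques_def is_clique_def by auto
  have nbr: "x \<in> C" if h1: "{?w, x} \<in> stp k t E C" and h2: "x \<noteq> ?w" for x
  proof -
    have "{?w, x} \<notin> E" using eb unfolding ebound_def by auto
    then obtain u where "u \<in> C" "{?w,x} = {?w,u}" using h1 unfolding stp_def by auto
    thus ?thesis using h2 by (metis doubleton_eq_iff)
  qed
  show ?thesis
  proof (intro equalityI subsetI)
    fix D assume D: "D \<in> KC k (Suc t) (stp k t E C)"
    hence Dc: "D \<subseteq> {..<k+Suc t}" "finite D" "card D = k"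
      "\<forall>u\<in>D. \<forall>v\<in>D. u \<noteq> v \<longrightarrow> {u, v} \<in> stp k t E C"
      unfolding KC_def kcliques_def is_clique_def by auto
    show "D \<in> KC k t E \<union> newc k t C"
    proof (cases "?w \<in> D")
      case False
      have "D \<subseteq> {..<k+t}"
      proof
        fix x assume "x \<in> D"
        hence "x < Suc (k+t)" "x \<noteq> k+t" using Dc False by auto
        thus "x \<in> {..<k+t}" by simp
      qed
      moreover have "\<forall>u\<in>D. \<forall>v\<in>D. u \<noteq> v \<longrightarrow> {u, v} \<in> E"
      proof (intro ballI impI)
        fix u v assume "u \<in> D" "v \<in> D" "u \<noteq> v"
        hence "{u,v} \<in> stp k t E C" using Dc by auto
        moreover have "u \<noteq> ?w" "v \<noteq> ?w" using False \<open>u\<in>D\<close> \<open>v\<in>D\<close> by auto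
        ultimately show "{u,v} \<in> E" unfolding stp_def by (auto simp: doubleton_eq_iff)
      qed
      ultimately show ?thesis using Dc unfolding KC_def kcliques_def is_clique_def by auto
    next
      case True
      have sub: "D - {?w} \<subseteq> C"
      proof
        fix x assume "x \<in> D - {?w}"
        hence "{?w,x} \<in> stp k t E C" "x \<noteq> ?w" using Dc True by auto
        thus "x \<in> C" using nbr by blast
      qed
      have "card (D - {?w}) + 1 = card C" using Dc True Cs
        by (metis Suc_eq_plus1 card.remove)
      then obtain u where "u \<in> C" "D - {?w} = C - {u}" using subset_card_minus_one[OF Cs(2) sub] by blast
      hence "D = insert ?w (C - {u})" using True by blast
      thus ?thesis using \<open>u\<in>C\<close> unfolding newc_def by blast
    qed
  next
    fix D assume "D \<in> KC k t E \<union> newc k t C"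
    thus "D \<in> KC k (Suc t) (stp k t E C)"
    proof
      assume "D \<in> KC k t E"
      thus ?thesis unfolding KC_def kcliques_def
        by (auto intro: is_clique_mono simp: stp_def)
    next
      assume "D \<in> newc k t C"
      then obtain u where u: "u \<in> C" "D = insert ?w (C - {u})" unfolding newc_def by auto
      have "D \<subseteq> {..<k + Suc t}" using u Cs by auto
      moreover have "finite D" using u Cs by auto
      moreover have "card D = k" using u Cs wC
        by (metis card.insert card_Diff_singleton_if finite_Diff Diff_iff One_nat_def Suc_pred card_gt_0_iff empty_iff)
      moreover have "\<forall>x\<in>D. \<forall>y\<in>D. x \<noteq> y \<longrightarrow> {x, y} \<in> stp k t E C"
      proof (intro ballI impI)
        fix x y assume "x \<in> D" "y \<in> D" "x \<noteq> y"
        show "{x,y} \<in> stp k t E C"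
        proof (cases "x = ?w")
          case True
          hence "y \<in> C" using \<open>y\<in>D\<close> \<open>x\<noteq>y\<close> u by auto
          thus ?thesis using True unfolding stp_def by blast
        next
          case False
          note xF = False
          show ?thesis
          proof (cases "y = ?w")
            case True
            hence "x \<in> C" using \<open>x\<in>D\<close> xF u by auto
            thus ?thesis using True unfolding stp_def by (auto simp: insert_commute)
          next
            case False
            hence "x \<in> C" "y \<in> C" using \<open>x\<in>D\<close> \<open>y\<in>D\<close> xF u by auto
            thus ?thesis using Ccl \<open>x\<noteq>y\<close> unfolding stp_def by blast
          qed
        qed
      qed
      ultimately show ?thesis unfolding KC_def kcliques_def is_clique_def by auto
    qed
  qed
qed

lemma newc_card:
  assumes C: "C \<in> KC k t E" shows "card (newc k t C) = k"
proof -
  have Cs: "C \<subseteq> {..<k+t}" "finite C" "card C = k" using KC_sub[OF C] by auto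
  have "inj_on (\<lambda>u. insert (k+t) (C - {u})) C"
  proof (rule inj_onI)
    fix u v assume "u \<in> C" "v \<in> C" "insert (k+t) (C - {u}) = insert (k+t) (C - {v})"
    moreover have "k + t \<notin> C" using Cs by auto
    ultimately have "C - {u} = C - {v}" by (metis Diff_iff insert_Diff1 insertE insert_absorb2 insert_ident singletonI)
    thus "u = v" using \<open>u\<in>C\<close> \<open>v\<in>C\<close> by blast
  qed
  thus ?thesis unfolding newc_def using Cs by (simp add: card_image)
qed

lemma newc_disj: "ebound k t E \<Longrightarrow> KC k t E \<inter> newc k t C = {}"
  unfolding newc_def KC_def kcliques_def is_clique_def by auto

lemma KC_finite: "finite (KC k t E)"
proof -
  have "KC k t E \<subseteq> Pow {..<k+t}" unfolding KC_def kcliques_def is_clique_def by auto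
  thus ?thesis by (rule finite_subset) simp
qed

lemma KC0: "k \<ge> 1 \<Longrightarrow> KC k 0 (complete_edges {..<k}) = {{..<k}}"
proof -
  assume k: "k \<ge> 1"
  have "x = {..<k}" if "x \<subseteq> {..<k}" "card x = k" for x
    using that by (intro card_subset_eq) auto
  thus ?thesis
  unfolding KC_def kcliques_def is_clique_def complete_edges_def
    by auto
qed

lemma KC_card_stp:
  assumes "ebound k t E" "C \<in> KC k t E"
  shows "card (KC k (Suc t) (stp k t E C)) = card (KC k t E) + k"
  using KC_stp[OF assms] newc_disj[OF assms(1)] newc_card[OF assms(2)] KC_finite
  by (metis card_Un_disjoint finite_imageI newc_def KC_sub assms(2))

lemma support:
  assumes "k \<ge> 1"
  shows "E \<in> set_pmf (ktree k t) \<Longrightarrow> ebound k t E \<and> card (KC k t E) = 1 + k*t"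
proof (induction t arbitrary: E)
  case 0
  hence "E = complete_edges {..<k}" by simp
  thus ?case using KC0[OF assms] unfolding ebound_def complete_edges_def by auto
next
  case (Suc t)
  have ne: "KC k t E' \<noteq> {}" "finite (KC k t E')" if "E' \<in> set_pmf (ktree k t)" for E'
    using Suc.IH[OF that] KC_finite by auto
  from Suc.prems obtain E' C where E': "E' \<in> set_pmf (ktree k t)" and C: "C \<in> KC k t E'" and
    E: "E = stp k t E' C"
    unfolding ktree_Suc using ne by auto
  show ?case using Suc.IH[OF E'] E ebound_stp[OF _ C] KC_card_stp[OF _ C] by simp
qed

lemma support_KC: "k \<ge> 1 \<Longrightarrow> E \<in> set_pmf (ktree k t) \<Longrightarrow> KC k t E \<noteq> {}"
  using support[of k E t] by auto

lemma set_pmf_ktree_Suc: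
  assumes "k \<ge> 1"
  shows "set_pmf (ktree k (Suc t)) = (\<Union>E\<in>set_pmf (ktree k t). stp k t E ` KC k t E)"
  unfolding ktree_Suc using support_KC[OF assms] KC_finite by auto

lemma finite_support:
  assumes "k \<ge> 1" shows "finite (set_pmf (ktree k t))"
proof (induction t)
  case 0 thus ?case by simp
next
  case (Suc t) thus ?case unfolding set_pmf_ktree_Suc[OF assms] using KC_finite by auto
qed

lemma KC_mono: "E \<subseteq> E' \<Longrightarrow> t \<le> t' \<Longrightarrow> KC k t E \<subseteq> KC k t' E'"
  unfolding KC_def kcliques_def by (auto intro: is_clique_mono)

lemma newc_inj: "k + t \<notin> C \<Longrightarrow> inj_on (\<lambda>u. insert (k+t) (C - {u})) C"
proof (rule inj_onI)
  fix u v assume "k + t \<notin> C" "u \<in> C" "v \<in> C" "insert (k+t) (C - {u}) = insert (k+t) (C - {v})"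
  hence "C - {u} = C - {v}" by (metis Diff_iff insert_Diff1 insertE insert_absorb2 insert_ident singletonI)
  thus "u = v" using \<open>u\<in>C\<close> \<open>v\<in>C\<close> by blast
qed

lemma newc_v_card:
  assumes C: "C \<in> KC k t E" and v: "v \<noteq> k + t"
  shows "card {D \<in> newc k t C. v \<in> D} = (if v \<in> C then k - 1 else 0)"
proof -
  have Cs: "C \<subseteq> {..<k+t}" "finite C" "card C = k" using KC_sub[OF C] by auto
  have wC: "k + t \<notin> C" using Cs by auto
  show ?thesis
  proof (cases "v \<in> C")
    case False
    hence "{D \<in> newc k t C. v \<in> D} = {}" using v unfolding newc_def by auto
    thus ?thesis using False by (simp only: card.empty if_False)
  next
    case True
  have eq: "{D \<in> newc k t C. v \<in> D} = (\<lambda>u. insert (k+t) (C - {u})) ` (C - {v})"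
    using v True unfolding newc_def by auto
  have "inj_on (\<lambda>u. insert (k+t) (C - {u})) (C - {v})"
    using newc_inj[OF wC] by (rule inj_on_subset) auto
  hence "card {D \<in> newc k t C. v \<in> D} = card (C - {v})" unfolding eq by (rule card_image)
  thus ?thesis using Cs True by (auto simp: card_Diff_singleton_if)
  qed
qed

lemma degree_stp:
  assumes eb: "ebound k t E" and C: "C \<in> KC k t E" and v: "v < k + t"
  shows "degree {..<k + Suc t} (stp k t E C) v = degree {..<k+t} E v + (if v \<in> C then 1 else 0)"
proof -
  let ?N = "{y \<in> {..<k+t}. y \<noteq> v \<and> {v, y} \<in> E}"
  have Cs: "C \<subseteq> {..<k+t}" using KC_sub[OF C] by auto
  have eq: "{y \<in> {..<k + Suc t}. y \<noteq> v \<and> {v, y} \<in> stp k t E C} = ?N \<union> (if v \<in> C then {k+t} else {})"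
  proof (intro equalityI subsetI)
    fix y assume y: "y \<in> {y \<in> {..<k + Suc t}. y \<noteq> v \<and> {v, y} \<in> stp k t E C}"
    show "y \<in> ?N \<union> (if v \<in> C then {k+t} else {})"
    proof (cases "{v,y} \<in> E")
      case True
      hence "y < k + t" using eb unfolding ebound_def by auto
      thus ?thesis using True y by auto
    next
      case False
      then obtain u where "u \<in> C" "{v,y} = {k+t,u}" using y unfolding stp_def by auto
      hence "v = u" "y = k + t" using v by (auto simp: doubleton_eq_iff)
      thus ?thesis using \<open>u \<in> C\<close> by auto
    qed
  next
    fix y assume "y \<in> ?N \<union> (if v \<in> C then {k+t} else {})"
    thus "y \<in> {y \<in> {..<k + Suc t}. y \<noteq> v \<and> {v, y} \<in> stp k t E C}"
      using v unfolding stp_def by (auto split: if_splits simp: insert_commute)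
  qed
  have "k + t \<notin> ?N" by auto
  thus ?thesis unfolding degree_def eq by (auto)
qed

definition C1 :: "nat \<Rightarrow> nat set" where "C1 k = {..<k}"
definition C2 :: "nat \<Rightarrow> nat set" where "C2 k = {k..<2*k}"
definition W :: "nat \<Rightarrow> nat \<Rightarrow> nat set" where "W k i = {i..<k+i}"
definition ch :: "nat \<Rightarrow> nat \<Rightarrow> nat set" where
  "ch k i = (if i < k then W k i else if i = k then C1 k else C2 k)"
fun Ech :: "nat \<Rightarrow> nat \<Rightarrow> nat set set" where
  "Ech k 0 = complete_edges {..<k}"
| "Ech k (Suc i) = stp k i (Ech k i) (ch k i)"
definition MM :: "nat \<Rightarrow> nat set set" where "MM k = KC k k (Ech k k) - {C1 k, C2 k}"
definition cnt :: "nat \<Rightarrow> nat \<Rightarrow> nat set set \<Rightarrow> nat \<Rightarrow> nat" where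
  "cnt k t E v = card {C \<in> KC k t E - MM k. v \<in> C}"

definition Inv0 :: "nat \<Rightarrow> nat \<Rightarrow> nat set set \<Rightarrow> bool" where
  "Inv0 k t E \<longleftrightarrow> ebound k t E \<and> card (KC k t E) = 1 + k*t \<and> Ech k k \<subseteq> E \<and>
    (\<exists>A B. A \<union> B = {..<k+t} \<and> A \<inter> B = {} \<and> C1 k \<subseteq> A \<and> C2 k \<subseteq> B \<and>
       (\<forall>e\<in>E - Ech k k. e \<subseteq> A \<or> e \<subseteq> B) \<and> (\<forall>D\<in>KC k t E - MM k. D \<subseteq> A \<or> D \<subseteq> B)) \<and>
    (\<forall>v\<in>C1 k \<union> C2 k. cnt k t E v \<le> (k-1) * degree {..<k+t} E v + 1)"

lemma MM_sub: "D \<in> MM k \<Longrightarrow> D \<subseteq> {..<k+k}"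
  unfolding MM_def using KC_sub by blast

lemma newc_MM: "k \<le> t \<Longrightarrow> newc k t C \<inter> MM k = {}"
  unfolding newc_def using MM_sub by fastforce

lemma cnt_stp:
  assumes eb: "ebound k t E" and C: "C \<in> KC k t E" and kt: "k \<le> t" and v: "v < k + k"
  shows "cnt k (Suc t) (stp k t E C) v = cnt k t E v + (if v \<in> C then k - 1 else 0)"
proof -
  have eq: "{D \<in> KC k (Suc t) (stp k t E C) - MM k. v \<in> D} =
     {D \<in> KC k t E - MM k. v \<in> D} \<union> {D \<in> newc k t C. v \<in> D}"
    unfolding KC_stp[OF eb C] using newc_MM[OF kt, of C] by auto
  have d: "{D \<in> KC k t E - MM k. v \<in> D} \<inter> {D \<in> newc k t C. v \<in> D} = {}"
    using newc_disj[OF eb, of C] by auto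
  have f1: "finite {D \<in> KC k t E - MM k. v \<in> D}" using KC_finite by auto
  have f2: "finite {D \<in> newc k t C. v \<in> D}" unfolding newc_def using KC_sub[OF C] by auto
  have "v \<noteq> k + t" using v kt by auto
  from newc_v_card[OF C this] show ?thesis unfolding cnt_def eq card_Un_disjoint[OF f1 f2 d] by simp
qed

lemma Ech_mono: "i \<le> j \<Longrightarrow> Ech k i \<subseteq> Ech k j"
proof (induction j)
  case 0 thus ?case by simp
next
  case (Suc j) thus ?case by (auto simp: le_Suc_eq stp_def)
qed

lemma Ech_step_supp:
  assumes "k \<ge> 1" "Ech k i \<in> set_pmf (ktree k i)" "ch k i \<in> KC k i (Ech k i)"
  shows "Ech k (Suc i) \<in> set_pmf (ktree k (Suc i))"
  unfolding set_pmf_ktree_Suc[OF assms(1)] using assms(2,3) by auto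

lemma W_chain:
  assumes k: "k \<ge> 1"
  shows "i \<le> k \<Longrightarrow> Ech k i \<in> set_pmf (ktree k i) \<and> W k i \<in> KC k i (Ech k i)"
proof (induction i)
  case 0
  have "W k 0 = {..<k}" unfolding W_def by auto
  thus ?case using KC0[OF k] by simp
next
  case (Suc i)
  hence IH: "Ech k i \<in> set_pmf (ktree k i)" "W k i \<in> KC k i (Ech k i)" and ik: "i < k" by auto
  have chi: "ch k i = W k i" using ik unfolding ch_def by simp
  have 1: "Ech k (Suc i) \<in> set_pmf (ktree k (Suc i))" using Ech_step_supp[OF k IH(1)] IH(2) chi by simp
  have eb: "ebound k i (Ech k i)" using support[OF k IH(1)] by simp
  have "W k (Suc i) = insert (k+i) (W k i - {i})" unfolding W_def using k by auto
  moreover have "i \<in> W k i" unfolding W_def using k by auto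
  ultimately have "W k (Suc i) \<in> newc k i (W k i)" unfolding newc_def by blast
  hence "W k (Suc i) \<in> KC k (Suc i) (Ech k (Suc i))" using KC_stp[OF eb IH(2)] chi by simp
  thus ?case using 1 by simp
qed

lemma C1_in: "k \<ge> 1 \<Longrightarrow> k \<le> t \<Longrightarrow> C1 k \<in> KC k t (Ech k t)"
  using KC0[of k] KC_mono[OF Ech_mono[of 0 t k], of 0 t] unfolding C1_def by auto

lemma C2_in: "k \<ge> 1 \<Longrightarrow> k \<le> t \<Longrightarrow> C2 k \<in> KC k t (Ech k t)"
proof -
  assume k: "k \<ge> 1" and t: "k \<le> t"
  have "C2 k = W k k" unfolding C2_def W_def by auto
  hence "C2 k \<in> KC k k (Ech k k)" using W_chain[OF k, of k] by simp
  thus ?thesis using KC_mono[OF Ech_mono[OF t] t] by auto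
qed

lemma ch_in: "k \<ge> 1 \<Longrightarrow> i < k + 2 \<Longrightarrow> ch k i \<in> KC k i (Ech k i)"
  using W_chain[of k i] C1_in[of k i] C2_in[of k i] unfolding ch_def by auto

lemma Ech_supp: "k \<ge> 1 \<Longrightarrow> i \<le> k + 2 \<Longrightarrow> Ech k i \<in> set_pmf (ktree k i)"
proof (induction i)
  case 0 thus ?case by simp
next
  case (Suc i) thus ?case using Ech_step_supp[of k i] ch_in[of k i] by simp
qed

lemma C12_ne: "k \<ge> 1 \<Longrightarrow> C1 k \<noteq> C2 k"
  unfolding C1_def C2_def by (metis atLeastLessThan_iff lessThan_iff less_le_not_le not_one_le_zero zero_less_iff_neq_zero)

lemma KC_k_MM: "k \<ge> 1 \<Longrightarrow> KC k k (Ech k k) - MM k = {C1 k, C2 k}"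
  unfolding MM_def using C1_in[of k k] C2_in[of k k] by blast

lemma card_MM: "k \<ge> 1 \<Longrightarrow> card (MM k) = k*k - 1"
proof -
  assume k: "k \<ge> 1"
  have "card (KC k k (Ech k k)) = 1 + k*k" using support[OF k Ech_supp[OF k, of k]] by simp
  moreover have "card {C1 k, C2 k} = 2" using C12_ne[OF k] by simp
  moreover have "{C1 k, C2 k} \<subseteq> KC k k (Ech k k)" using C1_in[OF k] C2_in[OF k] by auto
  ultimately show ?thesis unfolding MM_def using KC_finite by (simp add: card_Diff_subset)
qed

lemma Ech_k_ebound: "k \<ge> 1 \<Longrightarrow> i \<le> k+2 \<Longrightarrow> ebound k i (Ech k i)"
  using support[OF _ Ech_supp] by blast

lemma Inv0I:
  assumes "ebound k t E" "card (KC k t E) = 1 + k*t" "Ech k k \<subseteq> E"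
    "\<exists>A B. A \<union> B = {..<k+t} \<and> A \<inter> B = {} \<and> C1 k \<subseteq> A \<and> C2 k \<subseteq> B \<and>
       (\<forall>e\<in>E - Ech k k. e \<subseteq> A \<or> e \<subseteq> B) \<and> (\<forall>D\<in>KC k t E - MM k. D \<subseteq> A \<or> D \<subseteq> B)"
    "\<forall>v\<in>C1 k \<union> C2 k. cnt k t E v \<le> (k-1) * degree {..<k+t} E v + 1"
  shows "Inv0 k t E"
  unfolding Inv0_def using assms by (intro conjI)

lemma Inv0D:
  assumes "Inv0 k t E"
  shows "ebound k t E" "card (KC k t E) = 1 + k*t" "Ech k k \<subseteq> E"
    "\<exists>A B. A \<union> B = {..<k+t} \<and> A \<inter> B = {} \<and> C1 k \<subseteq> A \<and> C2 k \<subseteq> B \<and>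
       (\<forall>e\<in>E - Ech k k. e \<subseteq> A \<or> e \<subseteq> B) \<and> (\<forall>D\<in>KC k t E - MM k. D \<subseteq> A \<or> D \<subseteq> B)"
    "\<forall>v\<in>C1 k \<union> C2 k. cnt k t E v \<le> (k-1) * degree {..<k+t} E v + 1"
proof -
  note h = assms[unfolded Inv0_def]
  show "ebound k t E" using h by (rule conjunct1)
  show "card (KC k t E) = 1 + k*t" using h[THEN conjunct2] by (rule conjunct1)
  show "Ech k k \<subseteq> E" using h[THEN conjunct2, THEN conjunct2] by (rule conjunct1)
  show "\<exists>A B. A \<union> B = {..<k+t} \<and> A \<inter> B = {} \<and> C1 k \<subseteq> A \<and> C2 k \<subseteq> B \<and>
       (\<forall>e\<in>E - Ech k k. e \<subseteq> A \<or> e \<subseteq> B) \<and> (\<forall>D\<in>KC k t E - MM k. D \<subseteq> A \<or> D \<subseteq> B)"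
    using h[THEN conjunct2, THEN conjunct2, THEN conjunct2] by (rule conjunct1)
  show "\<forall>v\<in>C1 k \<union> C2 k. cnt k t E v \<le> (k-1) * degree {..<k+t} E v + 1"
    using h[THEN conjunct2, THEN conjunct2, THEN conjunct2] by (rule conjunct2)
qed

lemma cnt_base:
  assumes k: "k \<ge> 1" and v: "v \<in> C1 k \<union> C2 k" shows "cnt k k (Ech k k) v = 1"
proof -
  have part: "C1 k \<inter> C2 k = {}" unfolding C1_def C2_def by auto
  have "{C \<in> KC k k (Ech k k) - MM k. v \<in> C} = (if v \<in> C1 k then {C1 k} else {C2 k})"
    unfolding KC_k_MM[OF k] using v part by auto
  thus ?thesis unfolding cnt_def by simp
qed

lemma Inv0_base:
  assumes k: "k \<ge> 1" shows "Inv0 k k (Ech k k)"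
proof -
  have sp: "ebound k k (Ech k k) \<and> card (KC k k (Ech k k)) = 1 + k*k"
    using support[OF k Ech_supp[OF k, of k]] by simp
  have part: "C1 k \<union> C2 k = {..<k+k}" "C1 k \<inter> C2 k = {}" unfolding C1_def C2_def by auto
  have cn: "cnt k k (Ech k k) v = 1" if "v \<in> C1 k \<union> C2 k" for v
    using cnt_base[OF k that] .
  have p: "\<exists>A B. A \<union> B = {..<k+k} \<and> A \<inter> B = {} \<and> C1 k \<subseteq> A \<and> C2 k \<subseteq> B \<and>
       (\<forall>e\<in>Ech k k - Ech k k. e \<subseteq> A \<or> e \<subseteq> B) \<and> (\<forall>D\<in>KC k k (Ech k k) - MM k. D \<subseteq> A \<or> D \<subseteq> B)"
    apply (rule exI[of _ "C1 k"], rule exI[of _ "C2 k"])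
    unfolding KC_k_MM[OF k] using part by blast
  have c: "\<forall>v\<in>C1 k \<union> C2 k. cnt k k (Ech k k) v \<le> (k-1) * degree {..<k+k} (Ech k k) v + 1"
    using cn by simp
  show ?thesis using sp p c by (intro Inv0I) auto
qed

lemma part_stp:
  assumes eb: "ebound k t E" and CK: "C \<in> KC k t E" and AB: "A \<union> B = {..<k+t}" "A \<inter> B = {}"
    "\<forall>e\<in>E - X. e \<subseteq> A \<or> e \<subseteq> B" "\<forall>D\<in>KC k t E - M. D \<subseteq> A \<or> D \<subseteq> B"
    and CA: "C \<subseteq> A"
  shows "insert (k+t) A \<union> B = {..<k+Suc t}" "insert (k+t) A \<inter> B = {}"
    "\<forall>e\<in>stp k t E C - X. e \<subseteq> insert (k+t) A \<or> e \<subseteq> B"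
    "\<forall>D\<in>KC k (Suc t) (stp k t E C) - M. D \<subseteq> insert (k+t) A \<or> D \<subseteq> B"
proof -
  show "insert (k+t) A \<union> B = {..<k+Suc t}" using AB(1) by (simp add: lessThan_Suc)
  have "k + t \<notin> B" using AB(1) by blast
  thus "insert (k+t) A \<inter> B = {}" using AB(2) by blast
  show "\<forall>e\<in>stp k t E C - X. e \<subseteq> insert (k+t) A \<or> e \<subseteq> B"
  proof
    fix e assume e: "e \<in> stp k t E C - X"
    show "e \<subseteq> insert (k+t) A \<or> e \<subseteq> B"
    proof (cases "e \<in> E")
      case True thus ?thesis using e AB(3) by blast
    next
      case False
      then obtain u where "u \<in> C" "e = {k+t,u}" using e unfolding stp_def by auto
      hence "e \<subseteq> insert (k+t) A" using CA by blast
      thus ?thesis by blast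
    qed
  qed
  show "\<forall>D\<in>KC k (Suc t) (stp k t E C) - M. D \<subseteq> insert (k+t) A \<or> D \<subseteq> B"
  proof
    fix D assume D: "D \<in> KC k (Suc t) (stp k t E C) - M"
    show "D \<subseteq> insert (k+t) A \<or> D \<subseteq> B"
    proof (cases "D \<in> KC k t E")
      case True thus ?thesis using D AB(4) by blast
    next
      case False
      hence "D \<in> newc k t C" using D KC_stp[OF eb CK] by blast
      then obtain u where "D = insert (k+t) (C - {u})" unfolding newc_def by auto
      hence "D \<subseteq> insert (k+t) A" using CA by blast
      thus ?thesis by blast
    qed
  qed
qed

lemma Inv0_fwd:
  assumes k: "k \<ge> 1" and kt: "k \<le> t" and I: "Inv0 k t E" and C: "C \<in> KC k t E - MM k"
  shows "Inv0 k (Suc t) (stp k t E C)"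
proof -
  let ?w = "k + t"
  have eb: "ebound k t E" and cd: "card (KC k t E) = 1 + k*t" and ech: "Ech k k \<subseteq> E"
    and cn: "\<forall>v\<in>C1 k \<union> C2 k. cnt k t E v \<le> (k-1) * degree {..<k+t} E v + 1"
    using Inv0D[OF I] by auto
  obtain A B where AB: "A \<union> B = {..<k+t}" "A \<inter> B = {}" "C1 k \<subseteq> A" "C2 k \<subseteq> B"
       "\<forall>e\<in>E - Ech k k. e \<subseteq> A \<or> e \<subseteq> B" "\<forall>D\<in>KC k t E - MM k. D \<subseteq> A \<or> D \<subseteq> B"
    using Inv0D(4)[OF I] by blast
  have CK: "C \<in> KC k t E" using C by auto
  have wA: "?w \<notin> A" "?w \<notin> B" using AB(1) by auto
  have part: "\<exists>A B. A \<union> B = {..<k + Suc t} \<and> A \<inter> B = {} \<and> C1 k \<subseteq> A \<and> C2 k \<subseteq> B \<and>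
       (\<forall>e\<in>stp k t E C - Ech k k. e \<subseteq> A \<or> e \<subseteq> B) \<and>
       (\<forall>D\<in>KC k (Suc t) (stp k t E C) - MM k. D \<subseteq> A \<or> D \<subseteq> B)"
  proof (cases "C \<subseteq> A")
    case True
    note P = part_stp[OF eb CK AB(1,2,5,6) True]
    show ?thesis
      apply (rule exI[of _ "insert ?w A"], rule exI[of _ B])
      apply (intro conjI)
           apply (rule P(1))
          apply (rule P(2))
      using AB(3) apply blast
      using AB(4) apply blast
       apply (rule P(3))
      by (rule P(4))
  next
    case False
    hence True: "C \<subseteq> B" using AB(6) C by blast
    have AB': "B \<union> A = {..<k+t}" "B \<inter> A = {}" "\<forall>e\<in>E - Ech k k. e \<subseteq> B \<or> e \<subseteq> A"
      "\<forall>D\<in>KC k t E - MM k. D \<subseteq> B \<or> D \<subseteq> A" using AB(1,2,5,6) by (simp_all add: Un_commute Int_commute disj_commute)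
    note P = part_stp[OF eb CK AB' True]
    show ?thesis
      apply (rule exI[of _ A], rule exI[of _ "insert ?w B"])
      apply (intro conjI)
      using P(1) apply (simp add: Un_commute)
      using P(2) apply (simp add: Int_commute)
      using AB(3) apply blast
      using AB(4) apply blast
      using P(3) apply (simp add: disj_commute)
      using P(4) by (simp add: disj_commute)
  qed
  have cn': "\<forall>v\<in>C1 k \<union> C2 k. cnt k (Suc t) (stp k t E C) v \<le> (k-1) * degree {..<k+Suc t} (stp k t E C) v + 1"
  proof
    fix v assume v: "v \<in> C1 k \<union> C2 k"
    hence v2: "v < k + k" unfolding C1_def C2_def by auto
    hence v3: "v < k + t" using kt by auto
    show "cnt k (Suc t) (stp k t E C) v \<le> (k-1) * degree {..<k+Suc t} (stp k t E C) v + 1"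
      unfolding cnt_stp[OF eb CK kt v2] degree_stp[OF eb CK v3] using cn v
      by (cases "v \<in> C") (simp_all add: distrib_left)
  qed
  have c2: "card (KC k (Suc t) (stp k t E C)) = 1 + k * Suc t" using KC_card_stp[OF eb CK] cd by simp
  have e2: "Ech k k \<subseteq> stp k t E C" using ech unfolding stp_def by blast
  show ?thesis
    using ebound_stp[OF eb CK] c2 e2 part cn' by (rule Inv0I)
qed

lemma Inv0_bwd:
  assumes k: "k \<ge> 1" and kt: "k \<le> t" and eb: "ebound k t E" and cd: "card (KC k t E) = 1 + k*t"
    and CK: "C \<in> KC k t E" and I: "Inv0 k (Suc t) (stp k t E C)"
  shows "Inv0 k t E"
proof -
  let ?w = "k + t"
  let ?E = "stp k t E C"
  have ech': "Ech k k \<subseteq> ?E"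
    and cn: "\<forall>v\<in>C1 k \<union> C2 k. cnt k (Suc t) ?E v \<le> (k-1) * degree {..<k+Suc t} ?E v + 1"
    using Inv0D[OF I] by auto
  obtain A B where AB: "A \<union> B = {..<k+Suc t}" "A \<inter> B = {}" "C1 k \<subseteq> A" "C2 k \<subseteq> B"
       "\<forall>e\<in>?E - Ech k k. e \<subseteq> A \<or> e \<subseteq> B" "\<forall>D\<in>KC k (Suc t) ?E - MM k. D \<subseteq> A \<or> D \<subseteq> B"
    using Inv0D(4)[OF I] by blast
  have ebk: "ebound k k (Ech k k)" using Ech_k_ebound[OF k] by simp
  have ech: "Ech k k \<subseteq> E"
  proof
    fix e assume e: "e \<in> Ech k k"
    hence "e \<subseteq> {..<k+k}" using ebk unfolding ebound_def by auto
    hence "?w \<notin> e" using kt by auto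
    thus "e \<in> E" using e ech' unfolding stp_def by auto
  qed
  have C12: "C1 k \<subseteq> {..<k+t}" "C2 k \<subseteq> {..<k+t}" using kt unfolding C1_def C2_def by auto
  have part: "\<exists>A B. A \<union> B = {..<k + t} \<and> A \<inter> B = {} \<and> C1 k \<subseteq> A \<and> C2 k \<subseteq> B \<and>
       (\<forall>e\<in>E - Ech k k. e \<subseteq> A \<or> e \<subseteq> B) \<and>
       (\<forall>D\<in>KC k t E - MM k. D \<subseteq> A \<or> D \<subseteq> B)"
  proof (rule exI[of _ "A \<inter> {..<k+t}"], rule exI[of _ "B \<inter> {..<k+t}"], intro conjI)
    have "A \<inter> {..<k + t} \<union> B \<inter> {..<k + t} = (A \<union> B) \<inter> {..<k + t}" by (rule Int_Un_distrib2[symmetric])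
    also have "\<dots> = {..<k + t}" unfolding AB(1) by auto
    finally show "A \<inter> {..<k + t} \<union> B \<inter> {..<k + t} = {..<k + t}" .
    show "A \<inter> {..<k + t} \<inter> (B \<inter> {..<k + t}) = {}" using AB(2) by blast
    show "C1 k \<subseteq> A \<inter> {..<k + t}" using AB(3) C12 by blast
    show "C2 k \<subseteq> B \<inter> {..<k + t}" using AB(4) C12 by blast
    show "\<forall>e\<in>E - Ech k k. e \<subseteq> A \<inter> {..<k + t} \<or> e \<subseteq> B \<inter> {..<k + t}"
    proof
      fix e assume e: "e \<in> E - Ech k k"
      hence "e \<subseteq> {..<k+t}" using eb unfolding ebound_def by blast
      moreover have "e \<in> ?E - Ech k k" using e unfolding stp_def by blast
      hence "e \<subseteq> A \<or> e \<subseteq> B" by (rule bspec[OF AB(5)])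
      ultimately show "e \<subseteq> A \<inter> {..<k + t} \<or> e \<subseteq> B \<inter> {..<k + t}" by blast
    qed
    show "\<forall>D\<in>KC k t E - MM k. D \<subseteq> A \<inter> {..<k + t} \<or> D \<subseteq> B \<inter> {..<k + t}"
    proof
      fix D assume D: "D \<in> KC k t E - MM k"
      hence "D \<subseteq> {..<k+t}" using KC_sub by blast
      moreover have "KC k t E \<subseteq> KC k (Suc t) ?E" by (rule KC_mono) (auto simp: stp_def)
      hence "D \<in> KC k (Suc t) ?E - MM k" using D by blast
      hence "D \<subseteq> A \<or> D \<subseteq> B" by (rule bspec[OF AB(6)])
      ultimately show "D \<subseteq> A \<inter> {..<k + t} \<or> D \<subseteq> B \<inter> {..<k + t}" by blast
    qed
  qed
  have cn': "\<forall>v\<in>C1 k \<union> C2 k. cnt k t E v \<le> (k-1) * degree {..<k+t} E v + 1"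
  proof
    fix v assume v: "v \<in> C1 k \<union> C2 k"
    hence v2: "v < k + k" unfolding C1_def C2_def by auto
    hence v3: "v < k + t" using kt by auto
    have "cnt k (Suc t) ?E v \<le> (k-1) * degree {..<k+Suc t} ?E v + 1" using cn v by blast
    thus "cnt k t E v \<le> (k-1) * degree {..<k+t} E v + 1"
      unfolding cnt_stp[OF eb CK kt v2] degree_stp[OF eb CK v3]
      by (cases "v \<in> C") (simp_all add: distrib_left)
  qed
  show ?thesis using eb cd ech part cn' by (rule Inv0I)
qed

lemma MM_mixed:
  assumes k: "k \<ge> 1" and D: "D \<in> MM k"
  shows "D \<inter> C1 k \<noteq> {} \<and> D \<inter> C2 k \<noteq> {}"
proof -
  have Ds: "D \<subseteq> {..<k+k}" "finite D" "card D = k" "D \<noteq> C1 k" "D \<noteq> C2 k"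
    using D KC_sub unfolding MM_def by blast+
  have u: "C1 k \<union> C2 k = {..<k+k}" unfolding C1_def C2_def by auto
  have c: "card (C1 k) = k" "card (C2 k) = k" unfolding C1_def C2_def by auto
  have "D \<inter> C1 k \<noteq> {}"
  proof
    assume "D \<inter> C1 k = {}"
    hence "D \<subseteq> C2 k" using Ds u by blast
    moreover have "finite (C2 k)" unfolding C2_def by simp
    ultimately have "D = C2 k" using card_subset_eq[of "C2 k" D] Ds c by simp
    thus False using Ds by simp
  qed
  moreover have "D \<inter> C2 k \<noteq> {}"
  proof
    assume "D \<inter> C2 k = {}"
    hence "D \<subseteq> C1 k" using Ds u by blast
    moreover have "finite (C1 k)" unfolding C1_def by simp
    ultimately have "D = C1 k" using card_subset_eq[of "C1 k" D] Ds c by simp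
    thus False using Ds by simp
  qed
  ultimately show ?thesis by simp
qed

lemma Inv0_MM:
  assumes k: "k \<ge> 1" and kt: "k \<le> t" and C: "C \<in> MM k"
  shows "\<not> Inv0 k (Suc t) (stp k t E C)"
proof
  assume I: "Inv0 k (Suc t) (stp k t E C)"
  let ?w = "k + t"
  obtain A B where AB: "A \<union> B = {..<k+Suc t}" "A \<inter> B = {}" "C1 k \<subseteq> A" "C2 k \<subseteq> B"
       "\<forall>e\<in>stp k t E C - Ech k k. e \<subseteq> A \<or> e \<subseteq> B"
    using Inv0D(4)[OF I] by blast
  obtain a b where ab: "a \<in> C" "a \<in> C1 k" "b \<in> C" "b \<in> C2 k" using MM_mixed[OF k C] by blast
  have ebk: "ebound k k (Ech k k)" using Ech_k_ebound[OF k] by simp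
  have notE: "e \<notin> Ech k k" if "?w \<in> e" for e
  proof
    assume "e \<in> Ech k k"
    hence "e \<subseteq> {..<k+k}" using ebk unfolding ebound_def by blast
    thus False using that kt by auto
  qed
  have "{?w, a} \<in> stp k t E C - Ech k k" using ab notE unfolding stp_def by auto
  hence h1: "{?w, a} \<subseteq> A \<or> {?w, a} \<subseteq> B" by (rule bspec[OF AB(5)])
  have "a \<in> A" using ab AB(3) by blast
  hence "a \<notin> B" using AB(2) by blast
  hence "?w \<in> A" using h1 by blast
  moreover have "{?w, b} \<in> stp k t E C - Ech k k" using ab notE unfolding stp_def by auto
  hence h2: "{?w, b} \<subseteq> A \<or> {?w, b} \<subseteq> B" by (rule bspec[OF AB(5)])
  have "b \<in> B" using ab AB(4) by blast
  hence "b \<notin> A" using AB(2) by blast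
  hence "?w \<in> B" using h2 by blast
  ultimately show False using AB(2) by blast
qed

definition Good :: "nat \<Rightarrow> nat \<Rightarrow> nat set set \<Rightarrow> bool" where
  "Good k t E \<longleftrightarrow> Inv0 k t E \<and> Ech k (k+2) \<subseteq> E"

lemma Good_fwd:
  assumes k: "k \<ge> 1" and kt: "k \<le> t" and G: "Good k t E" and C: "C \<in> KC k t E - MM k"
  shows "Good k (Suc t) (stp k t E C)"
proof -
  have "Inv0 k (Suc t) (stp k t E C)" using Inv0_fwd[OF k kt _ C] G unfolding Good_def by blast
  moreover have "Ech k (k+2) \<subseteq> stp k t E C" using G unfolding Good_def stp_def by blast
  ultimately show ?thesis unfolding Good_def by blast
qed

lemma Good_bwd:
  assumes k: "k \<ge> 1" and kt: "k + 2 \<le> t" and eb: "ebound k t E" and cd: "card (KC k t E) = 1 + k*t"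
    and CK: "C \<in> KC k t E" and G: "Good k (Suc t) (stp k t E C)"
  shows "Good k t E"
proof -
  have I: "Inv0 k t E" using Inv0_bwd[OF k _ eb cd CK] G kt unfolding Good_def by auto
  have ebk: "ebound k (k+2) (Ech k (k+2))" by (rule Ech_k_ebound[OF k]) simp
  have "Ech k (k+2) \<subseteq> E"
  proof
    fix e assume e: "e \<in> Ech k (k+2)"
    hence "e \<subseteq> {..<k+(k+2)}" using ebk unfolding ebound_def by blast
    hence "k + t \<notin> e" using kt by auto
    moreover have "e \<in> stp k t E C" using e G unfolding Good_def by blast
    ultimately show "e \<in> E" unfolding stp_def by auto
  qed
  thus ?thesis using I unfolding Good_def by blast
qed

lemma Good_MM:
  assumes k: "k \<ge> 1" and kt: "k \<le> t" and C: "C \<in> MM k"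
  shows "\<not> Good k (Suc t) (stp k t E C)"
  using Inv0_MM[OF k kt C] unfolding Good_def by blast

lemma C1_notMM: "C1 k \<notin> MM k" and C2_notMM: "C2 k \<notin> MM k" unfolding MM_def by auto

lemma Good_base:
  assumes k: "k \<ge> 1"
  shows "Good k (k+2) (Ech k (k+2))" and "\<And>v. v \<in> C1 k \<union> C2 k \<Longrightarrow> cnt k (k+2) (Ech k (k+2)) v = k"
proof -
  have I0: "Inv0 k k (Ech k k)" by (rule Inv0_base[OF k])
  have ch0: "ch k k = C1 k" unfolding ch_def by simp
  have ch1: "ch k (Suc k) = C2 k" unfolding ch_def by simp
  have c0: "C1 k \<in> KC k k (Ech k k) - MM k" using C1_in[OF k] C1_notMM by auto
  have E1: "Ech k (Suc k) = stp k k (Ech k k) (C1 k)" using ch0 by simp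
  have I1: "Inv0 k (Suc k) (Ech k (Suc k))" unfolding E1 by (rule Inv0_fwd[OF k _ I0 c0]) simp
  have c1: "C2 k \<in> KC k (Suc k) (Ech k (Suc k)) - MM k" using C2_in[OF k, of "Suc k"] C2_notMM by auto
  have k2: "k + 2 = Suc (Suc k)" by simp
  have E2: "Ech k (k+2) = stp k (Suc k) (Ech k (Suc k)) (C2 k)" unfolding k2 using ch1 by simp
  have E2': "Ech k (Suc (Suc k)) = stp k (Suc k) (Ech k (Suc k)) (C2 k)" using ch1 by simp
  have "Inv0 k (Suc (Suc k)) (stp k (Suc k) (Ech k (Suc k)) (C2 k))" by (rule Inv0_fwd[OF k _ I1 c1]) simp
  hence I2: "Inv0 k (k+2) (Ech k (k+2))" by (simp only: k2 E2')
  thus "Good k (k+2) (Ech k (k+2))" unfolding Good_def by simp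
  fix v assume v: "v \<in> C1 k \<union> C2 k"
  hence v2: "v < k + k" unfolding C1_def C2_def by auto
  have eb0: "ebound k k (Ech k k)" by (rule Ech_k_ebound[OF k]) simp
  have eb1: "ebound k (Suc k) (Ech k (Suc k))" by (rule Ech_k_ebound[OF k]) simp
  have d: "C1 k \<inter> C2 k = {}" unfolding C1_def C2_def by auto
  have "cnt k (k+2) (Ech k (k+2)) v = cnt k (Suc (Suc k)) (stp k (Suc k) (Ech k (Suc k)) (C2 k)) v"
    by (simp only: k2 E2')
  also have "\<dots> = cnt k (Suc k) (Ech k (Suc k)) v + (if v \<in> C2 k then k - 1 else 0)"
    by (rule cnt_stp[OF eb1 _ _ v2]) (use c1 in auto)
  also have "cnt k (Suc k) (Ech k (Suc k)) v = cnt k k (Ech k k) v + (if v \<in> C1 k then k - 1 else 0)"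
    unfolding E1 by (rule cnt_stp[OF eb0 _ _ v2]) (use c0 in auto)
  finally show "cnt k (k+2) (Ech k (k+2)) v = k" using cnt_base[OF k v] v d k by auto
qed

lemma Good_cnt:
  assumes k: "k \<ge> 1" and kt: "k + 2 \<le> t" and G: "Good k t E" and v: "v \<in> C1 k \<union> C2 k"
  shows "cnt k t E v \<ge> k"
proof -
  have "KC k (k+2) (Ech k (k+2)) \<subseteq> KC k t E" using G kt unfolding Good_def by (intro KC_mono) auto
  hence "{C \<in> KC k (k+2) (Ech k (k+2)) - MM k. v \<in> C} \<subseteq> {C \<in> KC k t E - MM k. v \<in> C}" by blast
  hence "cnt k (k+2) (Ech k (k+2)) v \<le> cnt k t E v" unfolding cnt_def
    by (rule card_mono[rotated]) (use KC_finite in auto)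
  thus ?thesis using Good_base(2)[OF k v] by simp
qed

lemma MM_sub_KC: "Good k t E \<Longrightarrow> k \<le> t \<Longrightarrow> MM k \<subseteq> KC k t E"
proof -
  assume G: "Good k t E" and kt: "k \<le> t"
  have "Ech k k \<subseteq> E" using G unfolding Good_def by (blast dest: Inv0D(3))
  hence "KC k k (Ech k k) \<subseteq> KC k t E" using kt by (rule KC_mono)
  thus ?thesis unfolding MM_def by blast
qed

lemma Good_barrier:
  assumes k: "k \<ge> 2" and kt: "k \<le> t" and G: "Good k t E"
    and cn: "\<forall>v\<in>C1 k \<union> C2 k. cnt k t E v > (k-1) * s"
  shows "has_barrier k s {..<k+t} E"
proof -
  have k1: "k \<ge> 1" using k by simp
  have I: "Inv0 k t E" using G unfolding Good_def by simp
  note ID = Inv0D[OF I]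
  obtain A B where AB: "A \<union> B = {..<k+t}" "A \<inter> B = {}" "C1 k \<subseteq> A" "C2 k \<subseteq> B"
       "\<forall>e\<in>E - Ech k k. e \<subseteq> A \<or> e \<subseteq> B"
    using ID(4) by blast
  have KCm: "KC k k (Ech k k) \<subseteq> KC k t E" using ID(3) kt by (rule KC_mono)
  have cl1: "is_clique k {..<k+t} E (C1 k)" using C1_in[OF k1, of k] KCm unfolding KC_def kcliques_def by auto
  have cl2: "is_clique k {..<k+t} E (C2 k)" using C2_in[OF k1, of k] KCm unfolding KC_def kcliques_def by auto
  have dj: "C1 k \<inter> C2 k = {}" unfolding C1_def C2_def by auto
  have deg: "degree {..<k+t} E u \<ge> s" if u: "u \<in> C1 k \<union> C2 k" for u
  proof -
    have "(k-1) * s < (k-1) * degree {..<k+t} E u + 1" using cn ID(5) u by (meson less_le_trans)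
    show ?thesis
    proof (rule ccontr)
      assume "\<not> s \<le> degree {..<k+t} E u"
      hence "degree {..<k+t} E u + 1 \<le> s" by simp
      hence "(k-1) * (degree {..<k+t} E u + 1) \<le> (k-1) * s" by (rule mult_le_mono2)
      thus False using \<open>(k-1) * s < (k-1) * degree {..<k+t} E u + 1\<close> k by simp
    qed
  qed
  define S where "S = {{u, v} |u v. u \<in> C1 k \<and> v \<in> C2 k}"
  define R where "R = (\<lambda>x y. x \<in> {..<k+t} \<and> y \<in> {..<k+t} \<and> {x, y} \<in> E - S)"
  have ebk: "ebound k k (Ech k k)" using Ech_k_ebound[OF k1] by simp
  have inS: "{x,y} \<in> S" if "x \<in> C1 k" "y \<in> C2 k" for x y
    unfolding S_def using that by blast
  have stay: "y \<in> A" if xy: "R x y" and x: "x \<in> A" for x y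
  proof (rule ccontr)
    assume yA: "y \<notin> A"
    have yV: "y \<in> {..<k+t}" and e1: "{x,y} \<in> E" and e2: "{x,y} \<notin> S"
      using xy unfolding R_def by auto
    have yB: "y \<in> B" using yV yA AB(1) by blast
    have xB: "x \<notin> B" using x AB(2) by blast
    show False
    proof (cases "{x,y} \<in> Ech k k")
      case True
      have "{x,y} \<subseteq> {..<k+k}" using ebk[unfolded ebound_def] True by (rule bspec)
      moreover have u: "C1 k \<union> C2 k = {..<k+k}" unfolding C1_def C2_def by auto
      ultimately have xy2: "x \<in> C1 k \<union> C2 k" "y \<in> C1 k \<union> C2 k" by blast+
      have "x \<in> C1 k" using xy2 AB(4) xB by blast
      moreover have "y \<in> C2 k" using xy2 AB(3) yA by blast
      ultimately show False using e2 inS by blast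
    next
      case False
      hence "{x,y} \<in> E - Ech k k" using e1 by blast
      hence "{x,y} \<subseteq> A \<or> {x,y} \<subseteq> B" by (rule bspec[OF AB(5)])
      moreover have "\<not> {x,y} \<subseteq> A" using yA by simp
      moreover have "\<not> {x,y} \<subseteq> B" using xB by simp
      ultimately show False by blast
    qed
  qed
  have reach: "R\<^sup>*\<^sup>* x y \<Longrightarrow> x \<in> A \<Longrightarrow> y \<in> A" for x y
  proof (induction rule: rtranclp_induct)
    case base thus ?case .
  next
    case (step y z) thus ?case using stay by blast
  qed
  have nc: "\<not> graph_connected {..<k+t} (E - S)"
  proof
    assume gc: "graph_connected {..<k+t} (E - S)"
    have "0 \<in> {..<k+t}" "k \<in> {..<k+t}" using k kt by auto
    hence "R\<^sup>*\<^sup>* 0 k" using gc unfolding graph_connected_def R_def by blast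
    moreover have "0 \<in> A" using AB(3) k unfolding C1_def by auto
    ultimately have "k \<in> A" using reach by blast
    moreover have "k \<in> B" using AB(4) k unfolding C2_def by auto
    ultimately show False using AB(2) by blast
  qed
  have "is_barrier k s {..<k+t} E (C1 k) (C2 k)"
    unfolding is_barrier_def
    apply (intro conjI)
        apply (rule cl1)
       apply (rule cl2)
      apply (rule dj)
     apply (rule nc[unfolded S_def])
    using deg by blast
  thus ?thesis unfolding has_barrier_def by blast
qed

definition F :: "nat \<Rightarrow> nat \<Rightarrow> (nat set set \<Rightarrow> real) \<Rightarrow> real" where
  "F k t f = (\<Sum>E\<in>set_pmf (ktree k t). pmf (ktree k t) E * f E)"

lemma expectation_F:
  assumes k: "k \<ge> 1"
  shows "measure_pmf.expectation (ktree k t) f = F k t f"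
  unfolding F_def
  by (subst integral_measure_pmf_real[OF finite_support[OF k]]) (auto simp: mult.commute)

lemma prob_F:
  assumes k: "k \<ge> 1"
  shows "measure_pmf.prob (ktree k t) S = F k t (\<lambda>E. if E \<in> S then 1 else 0)"
proof -
  have "measure_pmf.prob (ktree k t) S = measure_pmf.prob (ktree k t) (S \<inter> set_pmf (ktree k t))"
    by (simp add: measure_Int_set_pmf)
  also have "\<dots> = sum (pmf (ktree k t)) (S \<inter> set_pmf (ktree k t))"
    by (rule measure_measure_pmf_finite) (use finite_support[OF k] in auto)
  also have "\<dots> = F k t (\<lambda>E. if E \<in> S then 1 else 0)"
  proof -
    have "S \<inter> set_pmf (ktree k t) = set_pmf (ktree k t) \<inter> S" by blast
    hence "sum (pmf (ktree k t)) (S \<inter> set_pmf (ktree k t)) =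
       (\<Sum>E\<in>set_pmf (ktree k t). if E \<in> S then pmf (ktree k t) E else 0)"
      using sum.inter_restrict[OF finite_support[OF k]] by simp
    thus ?thesis unfolding F_def by (auto intro: sum.cong)
  qed
  finally show ?thesis .
qed

lemma F_step:
  assumes k: "k \<ge> 1"
  shows "F k (Suc t) h = F k t (\<lambda>E. (\<Sum>C\<in>KC k t E. h (stp k t E C)) / real (card (KC k t E)))"
proof -
  have "F k (Suc t) h = measure_pmf.expectation (ktree k (Suc t)) h" by (rule expectation_F[OF k, symmetric])
  also have "\<dots> = (\<Sum>E\<in>set_pmf (ktree k t). pmf (ktree k t) E *\<^sub>R
      measure_pmf.expectation (map_pmf (stp k t E) (pmf_of_set (KC k t E))) h)"
    unfolding ktree_Suc
    by (rule pmf_expectation_bind) (use finite_support[OF k] KC_finite support_KC[OF k] in auto)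
  also have "\<dots> = F k t (\<lambda>E. (\<Sum>C\<in>KC k t E. h (stp k t E C)) / real (card (KC k t E)))"
    unfolding F_def
  proof (rule sum.cong[OF refl])
    fix E assume E: "E \<in> set_pmf (ktree k t)"
    have "measure_pmf.expectation (map_pmf (stp k t E) (pmf_of_set (KC k t E))) h =
       (\<Sum>C\<in>KC k t E. h (stp k t E C)) / real (card (KC k t E))"
      by (simp add: integral_pmf_of_set[OF support_KC[OF k E] KC_finite])
    thus "pmf (ktree k t) E *\<^sub>R measure_pmf.expectation (map_pmf (stp k t E) (pmf_of_set (KC k t E))) h =
      pmf (ktree k t) E * ((\<Sum>C\<in>KC k t E. h (stp k t E C)) / real (card (KC k t E)))" by simp
  qed
  finally show ?thesis .
qed

lemma F_mono: "(\<And>E. E \<in> set_pmf (ktree k t) \<Longrightarrow> f E \<le> g E) \<Longrightarrow> F k t f \<le> F k t g"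
  unfolding F_def by (intro sum_mono mult_left_mono) auto

lemma F_cmult: "F k t (\<lambda>E. a * f E) = a * F k t f"
  unfolding F_def by (simp add: sum_distrib_left algebra_simps)

lemma F_diff: "F k t (\<lambda>E. f E - g E) = F k t f - F k t g"
  unfolding F_def by (simp add: sum_subtractf algebra_simps)

lemma F_sum: "F k t (\<lambda>E. \<Sum>v\<in>V. f v E) = (\<Sum>v\<in>V. F k t (f v))"
  unfolding F_def by (simp add: sum_distrib_left sum.swap[of _ V])

lemma F_nonneg: "(\<And>E. E \<in> set_pmf (ktree k t) \<Longrightarrow> 0 \<le> f E) \<Longrightarrow> 0 \<le> F k t f"
  unfolding F_def by (intro sum_nonneg mult_nonneg_nonneg) auto

definition iG :: "nat \<Rightarrow> nat \<Rightarrow> nat set set \<Rightarrow> real" where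
  "iG k t E = (if Good k t E then 1 else 0)"

definition gG :: "nat \<Rightarrow> nat \<Rightarrow> nat \<Rightarrow> nat set set \<Rightarrow> real" where
  "gG k t v E = (if Good k t E then real (k-1) / (real (cnt k t E v) - real (k-1)) else 0)"

definition fA :: "nat \<Rightarrow> nat \<Rightarrow> real" where
  "fA k t = (real (1 + k*t) - real (k*k-1)) / real (1 + k*t)"

definition fB :: "nat \<Rightarrow> nat \<Rightarrow> real" where
  "fB k t = (real (1 + k*t) - real (k*k-1) - real (k-1)) / real (1 + k*t)"

lemma card_N:
  assumes k: "k \<ge> 1" and kt: "k \<le> t" and G: "Good k t E" and cd: "card (KC k t E) = 1 + k*t"
  shows "real (card (KC k t E - MM k)) = real (1 + k*t) - real (k*k-1)"
proof -
  have "MM k \<subseteq> KC k t E" using MM_sub_KC[OF G kt] .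
  moreover have "finite (MM k)" using finite_subset[OF \<open>MM k \<subseteq> KC k t E\<close> KC_finite] .
  ultimately have "card (KC k t E - MM k) = card (KC k t E) - card (MM k)" "card (MM k) \<le> card (KC k t E)"
    using KC_finite by (auto intro: card_Diff_subset card_mono)
  thus ?thesis using cd card_MM[OF k] by simp
qed

lemma A_step:
  assumes k: "k \<ge> 1" and kt: "k + 2 \<le> t"
  shows "F k (Suc t) (iG k (Suc t)) \<ge> fA k t * F k t (iG k t)"
proof -
  have "fA k t * F k t (iG k t) = F k t (\<lambda>E. fA k t * iG k t E)" by (simp add: F_cmult)
  also have "\<dots> \<le> F k t (\<lambda>E. (\<Sum>C\<in>KC k t E. iG k (Suc t) (stp k t E C)) / real (card (KC k t E)))"
  proof (rule F_mono)
    fix E assume E: "E \<in> set_pmf (ktree k t)"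
    have cd: "card (KC k t E) = 1 + k*t" using support[OF k E] by simp
    have "card (KC k t E) > 0" using cd by simp
    hence pos: "real (card (KC k t E)) > 0" by (simp only: of_nat_0_less_iff)
    have nn: "0 \<le> (\<Sum>C\<in>KC k t E. iG k (Suc t) (stp k t E C))" unfolding iG_def by (intro sum_nonneg) auto
    show "fA k t * iG k t E \<le> (\<Sum>C\<in>KC k t E. iG k (Suc t) (stp k t E C)) / real (card (KC k t E))"
    proof (cases "Good k t E")
      case False thus ?thesis using nn pos unfolding iG_def by simp
    next
      case True
      have "real (card (KC k t E - MM k)) = (\<Sum>C\<in>KC k t E - MM k. iG k (Suc t) (stp k t E C))"
        using Good_fwd[OF k _ True] kt unfolding iG_def by simp
      also have "\<dots> \<le> (\<Sum>C\<in>KC k t E. iG k (Suc t) (stp k t E C))"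
        by (rule sum_mono2) (auto simp: KC_finite iG_def)
      finally have "real (1 + k*t) - real (k*k-1) \<le> (\<Sum>C\<in>KC k t E. iG k (Suc t) (stp k t E C))"
        using card_N[OF k _ True cd] kt by simp
      thus ?thesis using True pos cd unfolding iG_def fA_def by (simp add: divide_right_mono)
    qed
  qed
  also have "\<dots> = F k (Suc t) (iG k (Suc t))" by (rule F_step[OF k, symmetric])
  finally show ?thesis .
qed

lemma sum_if_card:
  assumes "finite A"
  shows "(\<Sum>x\<in>A. if P x then a else b) = real (card {x\<in>A. P x}) * a + (real (card A) - real (card {x\<in>A. P x})) * (b::real)"
proof -
  have e1: "A \<inter> {x. P x} = {x\<in>A. P x}" by auto
  have e2: "A \<inter> - {x. P x} = A - {x\<in>A. P x}" by auto
  have "(\<Sum>x\<in>A. if P x then a else b) = (\<Sum>x\<in>{x\<in>A. P x}. a) + (\<Sum>x\<in>A - {x\<in>A. P x}. b)"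
    using sum.If_cases[OF assms, of P "\<lambda>_. a" "\<lambda>_. b"] unfolding e1 e2 .
  also have "\<dots> = real (card {x\<in>A. P x}) * a + real (card (A - {x\<in>A. P x})) * b" by simp
  also have "card (A - {x\<in>A. P x}) = card A - card {x\<in>A. P x}"
    using assms by (intro card_Diff_subset) auto
  also have "real (card A - card {x\<in>A. P x}) = real (card A) - real (card {x\<in>A. P x})"
    using assms by (intro of_nat_diff card_mono) auto
  finally show ?thesis .
qed

lemma B_step:
  assumes k: "k \<ge> 2" and kt: "k + 2 \<le> t" and v: "v \<in> C1 k \<union> C2 k"
  shows "F k (Suc t) (gG k (Suc t) v) \<le> fB k t * F k t (gG k t v)"
proof -
  have k1: "k \<ge> 1" using k by simp
  have kt': "k \<le> t" using kt by simp
  have v2: "v < k + k" using v unfolding C1_def C2_def by auto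
  have "F k (Suc t) (gG k (Suc t) v) = F k t (\<lambda>E. (\<Sum>C\<in>KC k t E. gG k (Suc t) v (stp k t E C)) / real (card (KC k t E)))"
    by (rule F_step[OF k1])
  also have "\<dots> \<le> F k t (\<lambda>E. fB k t * gG k t v E)"
  proof (rule F_mono)
    fix E assume E: "E \<in> set_pmf (ktree k t)"
    have eb: "ebound k t E" and cd: "card (KC k t E) = 1 + k*t" using support[OF k1 E] by auto
    show "(\<Sum>C\<in>KC k t E. gG k (Suc t) v (stp k t E C)) / real (card (KC k t E)) \<le> fB k t * gG k t v E"
    proof (cases "Good k t E")
      case False
      have "\<forall>C\<in>KC k t E. gG k (Suc t) v (stp k t E C) = 0"
        using Good_bwd[OF k1 kt eb cd] False unfolding gG_def by auto
      thus ?thesis using False unfolding gG_def by simp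
    next
      case True
      define c where "c = cnt k t E v"
      define j where "j = real (k - 1)"
      have ck: "c \<ge> k" using Good_cnt[OF k1 kt True v] unfolding c_def .
      have j1: "j \<ge> 1" unfolding j_def using k by simp
      have cj: "real c - j \<ge> 1" unfolding j_def using ck k by simp
      have MMsub: "MM k \<subseteq> KC k t E" using MM_sub_KC[OF True kt'] .
      let ?N = "KC k t E - MM k"
      have "(\<Sum>C\<in>KC k t E. gG k (Suc t) v (stp k t E C)) =
          (\<Sum>C\<in>?N. gG k (Suc t) v (stp k t E C)) + (\<Sum>C\<in>MM k. gG k (Suc t) v (stp k t E C))"
        by (rule sum.subset_diff[OF MMsub KC_finite])
      also have "(\<Sum>C\<in>MM k. gG k (Suc t) v (stp k t E C)) = 0"
        using Good_MM[OF k1 kt'] unfolding gG_def by auto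
      also have "(\<Sum>C\<in>?N. gG k (Suc t) v (stp k t E C)) =
          (\<Sum>C\<in>?N. if v \<in> C then j / (real c + j - j) else j / (real c - j))"
      proof (rule sum.cong[OF refl])
        fix C assume C: "C \<in> ?N"
        have G': "Good k (Suc t) (stp k t E C)" using Good_fwd[OF k1 kt' True C] .
        have "cnt k (Suc t) (stp k t E C) v = c + (if v \<in> C then k - 1 else 0)"
          unfolding c_def using cnt_stp[OF eb _ kt' v2] C by auto
        thus "gG k (Suc t) v (stp k t E C) = (if v \<in> C then j / (real c + j - j) else j / (real c - j))"
          using G' unfolding gG_def j_def by auto
      qed
      also have "\<dots> = real (card {C\<in>?N. v \<in> C}) * (j / (real c + j - j)) +
           (real (card ?N) - real (card {C\<in>?N. v \<in> C})) * (j / (real c - j))"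
        by (rule sum_if_card) (use KC_finite in auto)
      also have "card {C\<in>?N. v \<in> C} = c" unfolding c_def cnt_def ..
      also have "real (card ?N) = real (1 + k*t) - real (k*k-1)" by (rule card_N[OF k1 kt' True cd])
      finally have S: "(\<Sum>C\<in>KC k t E. gG k (Suc t) v (stp k t E C)) =
          real c * (j / (real c + j - j)) + (real (1 + k*t) - real (k*k-1) - real c) * (j / (real c - j))"
        by simp
      have "real c * (j / (real c + j - j)) + (real (1 + k*t) - real (k*k-1) - real c) * (j / (real c - j))
          = (real (1 + k*t) - real (k*k-1) - j) * (j / (real c - j))"
        using cj ck k by (simp add: field_simps)
      moreover have "gG k t v E = j / (real c - j)" using True unfolding gG_def c_def j_def by simp
      moreover have "real (card (KC k t E)) = real (1 + k*t)" using cd by simp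
      ultimately show ?thesis unfolding S fB_def j_def by (simp add: mult.commute)
    qed
  qed
  also have "\<dots> = fB k t * F k t (gG k t v)" by (rule F_cmult)
  finally show ?thesis .
qed

lemma ln_ge_aux: "(x::real) > 0 \<Longrightarrow> ln x \<ge> 1 - 1/x"
proof -
  assume x: "x > 0"
  have "ln (1/x) \<le> 1/x - 1" using x by (intro ln_le_minus_one) simp
  thus ?thesis using x by (simp add: ln_div)
qed

lemma inv_le_ln_diff: "(y::real) > 1 \<Longrightarrow> 1/y \<le> ln y - ln (y-1)"
proof -
  assume y: "y > 1"
  have "ln (y/(y-1)) \<ge> 1 - 1/(y/(y-1))" using y by (intro ln_ge_aux) simp
  moreover have "1 - 1/(y/(y-1)) = 1/y" using y by (simp add: field_simps)
  moreover have "ln (y/(y-1)) = ln y - ln (y-1)" using y by (simp add: ln_div)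
  ultimately show ?thesis by simp
qed

lemma ln_diff_le_inv: "(y::real) > 0 \<Longrightarrow> ln (y+1) - ln y \<le> 1/y"
proof -
  assume y: "y > 0"
  have "ln ((y+1)/y) \<le> (y+1)/y - 1" using y by (intro ln_le_minus_one) simp
  moreover have "(y+1)/y - 1 = 1/y" using y by (simp add: field_simps)
  moreover have "ln ((y+1)/y) = ln (y+1) - ln y" using y by (simp add: ln_div)
  ultimately show ?thesis by simp
qed


lemma prod_lower:
  fixes p b :: real and f :: "nat \<Rightarrow> real" and a :: nat
  assumes f: "\<And>s. s \<ge> a \<Longrightarrow> f s > 0 \<and> ln (f s) \<ge> - p / (real s + b)"
    and p: "p \<ge> 0" and ab: "real a + b > 1"
  shows "n \<ge> a \<Longrightarrow> (\<Prod>s\<in>{a..<n}. f s) \<ge> exp (- p * (ln (real n - 1 + b) - ln (real a - 1 + b)))"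
proof (induction n rule: dec_induct)
  case base thus ?case by simp
next
  case (step n)
  have y: "real n + b > 1" using step(1) ab by simp
  have fn: "f n > 0" "ln (f n) \<ge> - p / (real n + b)" using f step(1) by auto
  have "1 / (real n + b) \<le> ln (real n + b) - ln (real n + b - 1)" using inv_le_ln_diff[OF y] .
  hence "- p / (real n + b) \<ge> - p * (ln (real n + b) - ln (real n + b - 1))"
    using p by (metis (no_types, opaque_lifting) divide_inverse inverse_eq_divide minus_mult_left mult_1_right mult_le_cancel_left_pos mult_left_mono neg_le_iff_le)
  hence "ln (f n) \<ge> - p * (ln (real n + b) - ln (real n + b - 1))" using fn by linarith
  hence fe: "f n \<ge> exp (- p * (ln (real n + b) - ln (real n + b - 1)))"
    using fn by (metis exp_le_cancel_iff exp_ln)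
  have "(\<Prod>s\<in>{a..<Suc n}. f s) = (\<Prod>s\<in>{a..<n}. f s) * f n" using step(1) by (simp add: prod.atLeastLessThan_Suc)
  also have "\<dots> \<ge> exp (- p * (ln (real n - 1 + b) - ln (real a - 1 + b))) * exp (- p * (ln (real n + b) - ln (real n + b - 1)))"
  proof (rule mult_mono[OF step(3) fe])
    show "0 \<le> (\<Prod>s\<in>{a..<n}. f s)"
    proof (rule prod_nonneg)
      fix s assume "s \<in> {a..<n}"
      thus "0 \<le> f s" using f[of s] by auto
    qed
  qed simp
  finally show ?case by (simp add: exp_add[symmetric] algebra_simps)
qed

lemma prod_upper:
  fixes c b :: real and g :: "nat \<Rightarrow> real" and a :: nat
  assumes g: "\<And>s. s \<ge> a \<Longrightarrow> 0 \<le> g s \<and> g s \<le> 1 - c / (real s + b)"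
    and c: "c \<ge> 0" and ab: "real a + b > 0"
  shows "n \<ge> a \<Longrightarrow> (\<Prod>s\<in>{a..<n}. g s) \<le> exp (- c * (ln (real n + b) - ln (real a + b)))"
proof (induction n rule: dec_induct)
  case base thus ?case by simp
next
  case (step n)
  have y: "real n + b > 0" using step(1) ab by simp
  have gn: "0 \<le> g n" "g n \<le> 1 - c / (real n + b)" using g step(1) by auto
  have "ln (real n + b + 1) - ln (real n + b) \<le> 1 / (real n + b)" using ln_diff_le_inv[OF y] .
  hence "- c / (real n + b) \<le> - c * (ln (real n + b + 1) - ln (real n + b))"
    using c by (metis (no_types, opaque_lifting) divide_inverse inverse_eq_divide minus_mult_left mult_1_right mult_left_mono neg_le_iff_le)
  moreover have "1 - c / (real n + b) \<le> exp (- c / (real n + b))"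
    using exp_ge_add_one_self[of "- c / (real n + b)"] by simp
  ultimately have ge: "g n \<le> exp (- c * (ln (real n + b + 1) - ln (real n + b)))"
    using gn by (meson exp_le_cancel_iff order_trans)
  have P0: "(\<Prod>s\<in>{a..<n}. g s) \<ge> 0" using g by (intro prod_nonneg) auto
  have "(\<Prod>s\<in>{a..<Suc n}. g s) = (\<Prod>s\<in>{a..<n}. g s) * g n" using step(1) by (simp add: prod.atLeastLessThan_Suc)
  also have "\<dots> \<le> exp (- c * (ln (real n + b) - ln (real a + b))) * exp (- c * (ln (real n + b + 1) - ln (real n + b)))"
    by (rule mult_mono[OF step(3) ge]) (use gn in auto)
  finally show ?case by (simp add: exp_add[symmetric] algebra_simps)
qed


lemma real_kk: "k \<ge> 1 \<Longrightarrow> real (k*k-1) = real k * real k - 1"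
  by (simp add: of_nat_diff)

lemma fA_pos: assumes "k \<ge> 1" "k + 2 \<le> s" shows "fA k s > 0"
proof -
  have h: "real k * real k \<le> real k * real s" using assms by (intro mult_left_mono) auto
  have h0: "0 \<le> real k * real s" by simp
  have e1: "real (1 + k * s) = 1 + real k * real s" by simp
  have e2: "real (k * k - 1) = real k * real k - 1" using real_kk[OF assms(1)] .
  show ?thesis unfolding fA_def e1 e2 
  proof (rule divide_pos_pos)
    show "0 < 1 + real k * real s - (real k * real k - 1)" using h by linarith
    show "0 < 1 + real k * real s" using h0 by linarith
  qed
qed

lemma fB_nonneg: assumes "k \<ge> 1" "k + 2 \<le> s" shows "fB k s \<ge> 0"
proof -
  have h: "real k * (real k + 1) \<le> real k * real s" using assms by (intro mult_left_mono) auto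
  have h0: "0 \<le> real k * real s" by simp
  have e1: "real (1 + k * s) = 1 + real k * real s" by simp
  have e2: "real (k * k - 1) = real k * real k - 1" using real_kk[OF assms(1)] .
  have e3: "real (k - 1) = real k - 1" using assms by (simp add: of_nat_diff)
  have h': "real k * real k + real k \<le> real k * real s" using h by (simp add: algebra_simps)
  show ?thesis unfolding fB_def e1 e2 e3
  proof (rule divide_nonneg_pos)
    show "0 \<le> 1 + real k * real s - (real k * real k - 1) - (real k - 1)" using h' by linarith
    show "0 < 1 + real k * real s" using h0 by linarith
  qed
qed

lemma A_iter:
  assumes k: "k \<ge> 1"
  shows "n \<ge> k + 2 \<Longrightarrow> F k n (iG k n) \<ge> (\<Prod>s\<in>{k+2..<n}. fA k s) * F k (k+2) (iG k (k+2))"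
proof (induction n rule: dec_induct)
  case base thus ?case by simp
next
  case (step n)
  have "(\<Prod>s\<in>{k+2..<Suc n}. fA k s) * F k (k+2) (iG k (k+2)) = fA k n * ((\<Prod>s\<in>{k+2..<n}. fA k s) * F k (k+2) (iG k (k+2)))"
    using step(1) by (simp add: prod.atLeastLessThan_Suc)
  also have "\<dots> \<le> fA k n * F k n (iG k n)"
    by (rule mult_left_mono[OF step(3)]) (use fA_pos[OF k step(1)] in simp)
  also have "\<dots> \<le> F k (Suc n) (iG k (Suc n))" by (rule A_step[OF k step(1)])
  finally show ?case .
qed

lemma gG_nonneg:
  assumes k: "k \<ge> 1" and t: "k + 2 \<le> t" and v: "v \<in> C1 k \<union> C2 k"
  shows "gG k t v E \<ge> 0"
proof (cases "Good k t E")
  case True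
  hence "cnt k t E v \<ge> k" by (rule Good_cnt[OF k t _ v])
  hence "real (cnt k t E v) - real (k-1) > 0" using k by simp
  thus ?thesis using True unfolding gG_def by simp
qed (simp add: gG_def)

lemma B_iter:
  assumes k: "k \<ge> 2" and v: "v \<in> C1 k \<union> C2 k"
  shows "n \<ge> k + 2 \<Longrightarrow> F k n (gG k n v) \<le> (\<Prod>s\<in>{k+2..<n}. fB k s) * F k (k+2) (gG k (k+2) v)"
proof (induction n rule: dec_induct)
  case base thus ?case by simp
next
  case (step n)
  have k1: "k \<ge> 1" using k by simp
  have "F k (Suc n) (gG k (Suc n) v) \<le> fB k n * F k n (gG k n v)" by (rule B_step[OF k step(1) v])
  also have "\<dots> \<le> fB k n * ((\<Prod>s\<in>{k+2..<n}. fB k s) * F k (k+2) (gG k (k+2) v))"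
    by (rule mult_left_mono[OF step(3)]) (use fB_nonneg[OF k1 step(1)] in simp)
  also have "\<dots> = (\<Prod>s\<in>{k+2..<Suc n}. fB k s) * F k (k+2) (gG k (k+2) v)"
    using step(1) by (simp add: prod.atLeastLessThan_Suc)
  finally show ?case .
qed

lemma base_pos:
  assumes k: "k \<ge> 1" shows "F k (k+2) (iG k (k+2)) > 0"
proof -
  let ?E = "Ech k (k+2)"
  have E: "?E \<in> set_pmf (ktree k (k+2))" by (rule Ech_supp[OF k]) simp
  have "pmf (ktree k (k+2)) ?E * iG k (k+2) ?E \<le> F k (k+2) (iG k (k+2))"
    unfolding F_def
  proof (rule member_le_sum[OF E])
    show "finite (set_pmf (ktree k (k+2)))" by (rule finite_support[OF k])
    fix x show "0 \<le> pmf (ktree k (k+2)) x * iG k (k+2) x"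
      by (intro mult_nonneg_nonneg pmf_nonneg) (simp add: iG_def)
  qed
  moreover have "pmf (ktree k (k+2)) ?E > 0" using E by (simp add: pmf_positive)
  moreover have "iG k (k+2) ?E = 1" using Good_base(1)[OF k] unfolding iG_def by simp
  ultimately show ?thesis by simp
qed

lemma base_gG:
  assumes k: "k \<ge> 1" and v: "v \<in> C1 k \<union> C2 k"
  shows "F k (k+2) (gG k (k+2) v) \<le> real (k-1) * F k (k+2) (iG k (k+2))"
proof -
  have "F k (k+2) (gG k (k+2) v) \<le> F k (k+2) (\<lambda>E. real (k-1) * iG k (k+2) E)"
  proof (rule F_mono)
    fix E
    show "gG k (k+2) v E \<le> real (k-1) * iG k (k+2) E"
    proof (cases "Good k (k+2) E")
      case True
      have "cnt k (k+2) E v \<ge> k" by (rule Good_cnt[OF k _ True v]) simp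
      hence "real (cnt k (k+2) E v) - real (k-1) \<ge> 1" using k by simp
      hence "real (k-1) / (real (cnt k (k+2) E v) - real (k-1)) \<le> real (k-1) / 1"
        by (intro divide_left_mono) auto
      thus ?thesis using True unfolding gG_def iG_def by simp
    qed (simp add: gG_def iG_def)
  qed
  thus ?thesis by (simp add: F_cmult)
qed

lemma fA_formula:
  assumes k: "k \<ge> 1"
  shows "fA k s = (real k * real s + 2 - real k * real k) / (1 + real k * real s)"
  unfolding fA_def using real_kk[OF k] by (simp add: algebra_simps)

lemma fBA_formula:
  assumes k: "k \<ge> 1" and s: "k + 2 \<le> s"
  shows "fB k s / fA k s = 1 - ((real k - 1) / real k) / (real s + (2 - real k * real k) / real k)"
proof -
  have h: "real k * real k \<le> real k * real s" using assms by (intro mult_left_mono) auto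
  have kp: "real k > 0" using k by simp
  have D: "real k * real s + 2 - real k * real k > 0" using h by linarith
  have T: "1 + real k * real s > 0" by (simp add: add_pos_nonneg)
  have e3: "real (k - 1) = real k - 1" using k by (simp add: of_nat_diff)
  have fB: "fB k s = (real k * real s + 2 - real k * real k - (real k - 1)) / (1 + real k * real s)"
    unfolding fB_def e3 using real_kk[OF k] by (simp add: algebra_simps)
  define DD where "DD = real k * real s + 2 - real k * real k"
  have e1: "real s + (2 - real k * real k) / real k = DD / real k"
    unfolding DD_def using kp by (simp add: field_simps)
  have e2: "((real k - 1) / real k) / (DD / real k) = (real k - 1) / DD"
    using kp D unfolding DD_def by simp
  have e3: "fB k s / fA k s = (DD - (real k - 1)) / DD"
    unfolding fB fA_formula[OF k] DD_def using D T by simp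
  have DDp: "DD > 0" using D unfolding DD_def .
  have e4: "1 - (real k - 1) / DD = (DD - (real k - 1)) / DD"
    using DDp by (simp add: diff_divide_distrib)
  show ?thesis unfolding e1 e2 e3 e4 ..
qed

lemma R_bound:
  assumes k: "k \<ge> 2" and n: "n \<ge> k + 2"
  defines "p \<equiv> (real k * real k - 1) / real k" and "b \<equiv> (2 - real k * real k) / real k"
  shows "(\<Prod>s\<in>{k+2..<n}. fA k s) \<ge> exp (p * ln (real k + 1 + b)) * real n powr (- p)"
proof -
  have k1: "k \<ge> 1" using k by simp
  have kp: "real k > 0" using k by simp
  have p0: "p \<ge> 0" unfolding p_def using k by (intro divide_nonneg_pos) (auto simp: one_le_power[of "real k" 2, simplified power2_eq_square])
  have bk: "real k + b = 2 / real k" unfolding b_def using kp by (simp add: field_simps)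
  have "2 / real k > 0" using kp by simp
  moreover have "real (k+2) + b = 2 + (real k + b)" by simp
  ultimately have ab: "real (k+2) + b > 1" using bk by linarith
  have b1: "b < 1"
  proof -
    have h: "2 / real k \<le> 1" using k by simp
    have "real k \<ge> 2" using k by simp
    thus ?thesis using bk h by linarith
  qed
  have f: "fA k s > 0 \<and> ln (fA k s) \<ge> - p / (real s + b)" if s: "s \<ge> k + 2" for s
  proof
    show fp: "fA k s > 0" by (rule fA_pos[OF k1 s])
    have h: "real k * real k \<le> real k * real s" using s by (intro mult_left_mono) auto
    have D: "real k * real s + 2 - real k * real k > 0" using h by linarith
    have T: "1 + real k * real s > 0" by (simp add: add_pos_nonneg)
    define DD where "DD = real k * real s + 2 - real k * real k"
    define TT where "TT = 1 + real k * real s"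
    have DDp: "DD > 0" using D unfolding DD_def .
    have TTp: "TT > 0" using T unfolding TT_def .
    have sb: "real s + b = DD / real k" unfolding DD_def b_def using kp by (simp add: field_simps)
    have fa: "fA k s = DD / TT" unfolding fA_formula[OF k1] DD_def TT_def ..
    have "1 - 1 / fA k s = (DD - TT) / DD" unfolding fa using DDp TTp by (simp add: field_simps)
    also have "DD - TT = - (real k * real k - 1)" unfolding DD_def TT_def by simp
    also have "- (real k * real k - 1) / DD = - p / (real s + b)" unfolding sb p_def using kp DDp by simp
    finally have "1 - 1 / fA k s = - p / (real s + b)" .
    thus "ln (fA k s) \<ge> - p / (real s + b)" using ln_ge_aux[OF fp] by simp
  qed
  have L: "(\<Prod>s\<in>{k+2..<n}. fA k s) \<ge> exp (- p * (ln (real n - 1 + b) - ln (real (k+2) - 1 + b)))"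
    by (rule prod_lower[OF f p0 ab n]) auto
  have "2 / real k > 0" using kp by simp
  moreover have "real n \<ge> real k + 2" using n by simp
  ultimately have pos: "real n - 1 + b > 0" using bk by linarith
  have "exp (- p * (ln (real n - 1 + b) - ln (real (k+2) - 1 + b))) =
        exp (p * ln (real k + 1 + b)) * (real n - 1 + b) powr (- p)"
    using pos by (simp add: powr_def exp_add[symmetric] algebra_simps)
  also have "(real n - 1 + b) powr (- p) \<ge> real n powr (- p)"
    by (rule powr_mono2') (use p0 pos b1 in auto)
  hence "exp (p * ln (real k + 1 + b)) * (real n - 1 + b) powr (- p) \<ge> exp (p * ln (real k + 1 + b)) * real n powr (- p)"
    by simp
  finally show ?thesis using L by linarith
qed

lemma Q_bound:
  assumes k: "k \<ge> 2" and n: "n \<ge> 2 * k + 2"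
  defines "cc \<equiv> (real k - 1) / real k" and "b \<equiv> (2 - real k * real k) / real k"
  shows "(\<Prod>s\<in>{k+2..<n}. fB k s / fA k s) \<le> exp (cc * ln (real k + 2 + b)) * 2 powr cc * real n powr (- cc)"
proof -
  have k1: "k \<ge> 1" using k by simp
  have kp: "real k > 0" using k by simp
  have c0: "cc \<ge> 0" unfolding cc_def using k by simp
  have bk: "real k + b = 2 / real k" unfolding b_def using kp by (simp add: field_simps)
  have "2 / real k > 0" using kp by simp
  moreover have "real (k+2) + b = 2 + (real k + b)" by simp
  ultimately have ab: "real (k+2) + b > 0" using bk by linarith
  have n2: "n \<ge> k + 2" using n by simp
  have g: "0 \<le> fB k s / fA k s \<and> fB k s / fA k s \<le> 1 - cc / (real s + b)" if s: "s \<ge> k + 2" for s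
  proof
    show "0 \<le> fB k s / fA k s" by (rule divide_nonneg_pos[OF fB_nonneg[OF k1 s] fA_pos[OF k1 s]])
    have "fB k s / fA k s = 1 - cc / (real s + b)" unfolding cc_def b_def by (rule fBA_formula[OF k1 s])
    thus "fB k s / fA k s \<le> 1 - cc / (real s + b)" by simp
  qed
  have U: "(\<Prod>s\<in>{k+2..<n}. fB k s / fA k s) \<le> exp (- cc * (ln (real n + b) - ln (real (k+2) + b)))"
    by (rule prod_upper[OF g c0 ab n2]) auto
  have "2 / real k \<ge> 0" by simp
  hence bge: "b \<ge> - real k" using bk by linarith
  have nh: "real n / 2 \<le> real n + b" "real n / 2 > 0" using n bge by auto
  have "exp (- cc * (ln (real n + b) - ln (real (k+2) + b))) =
        exp (cc * ln (real k + 2 + b)) * (real n + b) powr (- cc)"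
    using nh by (simp add: powr_def exp_add[symmetric] algebra_simps)
  also have "(real n + b) powr (- cc) \<le> (real n / 2) powr (- cc)"
    by (rule powr_mono2') (use c0 nh in auto)
  also have "(real n / 2) powr (- cc) = 2 powr cc * real n powr (- cc)"
    by (simp add: powr_divide powr_minus field_simps)
  finally show ?thesis using U by (simp add: mult.assoc mult_left_mono)
qed

lemma pointwise:
  assumes k: "k \<ge> 2" and n: "k + 2 \<le> n" and s1: "s \<ge> 1" and sc: "real s \<ge> x"
  shows "iG k n E - (\<Sum>v\<in>C1 k \<union> C2 k. real s * gG k n v E) \<le>
    (if E \<in> {E. \<exists>s::nat. real s \<ge> x \<and> has_barrier k s (ktree_vertices k n) E} then 1 else 0)"
proof -
  have k1: "k \<ge> 1" using k by simp
  have fin: "finite (C1 k \<union> C2 k)" unfolding C1_def C2_def by simp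
  have nn: "\<And>v. v \<in> C1 k \<union> C2 k \<Longrightarrow> 0 \<le> real s * gG k n v E"
    using gG_nonneg[OF k1 n] by simp
  have S0: "0 \<le> (\<Sum>v\<in>C1 k \<union> C2 k. real s * gG k n v E)" using nn by (intro sum_nonneg) auto
  show ?thesis
  proof (cases "Good k n E")
    case False thus ?thesis using S0 unfolding iG_def by simp
  next
    case G: True
    show ?thesis
    proof (cases "\<forall>v\<in>C1 k \<union> C2 k. cnt k n E v > (k-1) * s")
      case True
      have "has_barrier k s {..<k+n} E" by (rule Good_barrier[OF k _ G True]) (use n in simp)
      hence "E \<in> {E. \<exists>s::nat. real s \<ge> x \<and> has_barrier k s (ktree_vertices k n) E}"
        using sc unfolding ktree_vertices_def by blast
      thus ?thesis using S0 G unfolding iG_def by simp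
    next
      case False
      then obtain v where v: "v \<in> C1 k \<union> C2 k" and cv: "cnt k n E v \<le> (k-1) * s" by (auto simp: not_less)
      have ck: "cnt k n E v \<ge> k" by (rule Good_cnt[OF k1 n G v])
      define j where "j = real (k-1)"
      define d where "d = real (cnt k n E v) - j"
      have j1: "j \<ge> 1" unfolding j_def using k by simp
      have d1: "d \<ge> 1" unfolding d_def j_def using ck k by simp
      have "real (cnt k n E v) \<le> j * real s" unfolding j_def using cv by (metis of_nat_mono of_nat_mult)
      hence dle: "d \<le> j * real s" unfolding d_def using j1 by linarith
      have gv: "gG k n v E = j / d" using G unfolding gG_def j_def d_def by simp
      have "1 \<le> real s * (j / d)"
      proof -
        have "d \<le> real s * j" using dle by (simp add: mult.commute)
        thus ?thesis using d1 by (simp add: field_simps)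
      qed
      also have "real s * (j / d) \<le> (\<Sum>v\<in>C1 k \<union> C2 k. real s * gG k n v E)"
        unfolding gv[symmetric] by (rule member_le_sum[OF v _ fin]) (use nn in auto)
      finally have "1 \<le> (\<Sum>v\<in>C1 k \<union> C2 k. real s * gG k n v E)" .
      thus ?thesis unfolding iG_def by simp
    qed
  qed
qed

theorem lemma8:
  fixes k :: nat
  assumes "k \<ge> 2"
  shows "\<exists>c c' :: real. c > 0 \<and> c' > 0 \<and> (\<exists>N. \<forall>n \<ge> N.
           measure_pmf.prob (ktree k n)
             {E. \<exists>s::nat. real s \<ge> c * real n powr (1 - 1 / real k) \<and>
                    has_barrier k s (ktree_vertices k n) E}
           \<ge> c' * real n powr (1 / real k - real k))"
proof -
  have k: "k \<ge> 2" using assms .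
  have k1: "k \<ge> 1" using k by simp
  define K where "K = real k"
  have K2: "K \<ge> 2" unfolding K_def using k by simp
  define p where "p = (K*K - 1)/K"
  define b where "b = (2 - K*K)/K"
  define cc where "cc = (K - 1)/K"
  define a0 where "a0 = F k (k+2) (iG k (k+2))"
  define Cr where "Cr = exp (p * ln (K + 1 + b))"
  define Cq where "Cq = exp (cc * ln (K + 2 + b)) * 2 powr cc"
  define c where "c = 1 / (8 * K * (K - 1) * Cq)"
  define c' where "c' = a0 * Cr / 2"
  have a0p: "a0 > 0" unfolding a0_def by (rule base_pos[OF k1])
  have Crp: "Cr > 0" unfolding Cr_def by simp
  have Cqp: "Cq > 0" unfolding Cq_def by simp
  have ccp: "cc > 0" unfolding cc_def using K2 by simp
  have cp: "c > 0" unfolding c_def using K2 Cqp by simp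
  have c'p: "c' > 0" unfolding c'_def using a0p Crp by simp
  have e_cc: "1 - 1 / real k = cc" unfolding cc_def K_def using k by (simp add: field_simps)
  have e_p: "1 / real k - real k = - p" unfolding p_def K_def using k by (simp add: field_simps)
  define N where "N = nat \<lceil>(1/c) powr (1/cc)\<rceil> + 2*k + 2"
  show ?thesis
  proof (rule exI[of _ c], rule exI[of _ c'], intro conjI cp c'p exI[of _ N] allI impI)
    fix n assume nN: "N \<le> n"
    have n1: "n \<ge> 2*k+2" and n2: "k + 2 \<le> n" using nN unfolding N_def by auto
    have npos: "real n > 0" using n2 by simp
    have nge: "real n \<ge> (1/c) powr (1/cc)"
    proof -
      have "(1/c) powr (1/cc) \<le> real (nat \<lceil>(1/c) powr (1/cc)\<rceil>)" by (rule real_nat_ceiling_ge)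
      also have "\<dots> \<le> real n" using nN unfolding N_def by simp
      finally show ?thesis .
    qed
    have "real n powr cc \<ge> ((1/c) powr (1/cc)) powr cc"
      by (rule powr_mono2) (use ccp nge in auto)
    also have "((1/c) powr (1/cc)) powr cc = 1/c" using ccp cp by (simp add: powr_powr)
    finally have cn1: "c * real n powr cc \<ge> 1" using cp by (simp add: field_simps)
    define s where "s = nat \<lceil>c * real n powr cc\<rceil>"
    have s_ge: "real s \<ge> c * real n powr cc" unfolding s_def by (rule real_nat_ceiling_ge)
    have s_le: "real s \<le> 2 * (c * real n powr cc)"
    proof -
      have "real s \<le> c * real n powr cc + 1" unfolding s_def using cn1 by linarith
      thus ?thesis using cn1 by linarith
    qed
    have s1: "s \<ge> 1" using s_ge cn1 by linarith
    define R where "R = (\<Prod>s\<in>{k+2..<n}. fA k s)"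
    define Q where "Q = (\<Prod>s\<in>{k+2..<n}. fB k s / fA k s)"
    have Rb: "R \<ge> Cr * real n powr (- p)" unfolding R_def Cr_def p_def b_def K_def by (rule R_bound[OF k n2])
    have Qb: "Q \<le> Cq * real n powr (- cc)" unfolding Q_def Cq_def cc_def b_def K_def using Q_bound[OF k n1] by simp
    have R0: "R \<ge> 0" unfolding R_def using fA_pos[OF k1] by (intro prod_nonneg) (auto intro: less_imp_le)
    have Q0: "Q \<ge> 0" unfolding Q_def using fA_pos[OF k1] fB_nonneg[OF k1] by (intro prod_nonneg divide_nonneg_pos) auto
    have prodB: "(\<Prod>s\<in>{k+2..<n}. fB k s) = R * Q"
    proof -
      have "(\<Prod>s\<in>{k+2..<n}. fB k s) = (\<Prod>s\<in>{k+2..<n}. fA k s * (fB k s / fA k s))"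
        using fA_pos[OF k1] by (intro prod.cong) (auto simp: less_imp_neq[symmetric])
      moreover have "R * Q = (\<Prod>s\<in>{k+2..<n}. fA k s * (fB k s / fA k s))"
        unfolding R_def Q_def by (rule prod.distrib[symmetric])
      ultimately show ?thesis by simp
    qed
    have A: "F k n (iG k n) \<ge> R * a0" unfolding R_def a0_def by (rule A_iter[OF k1 n2])
    have B: "F k n (gG k n v) \<le> R * Q * (real (k-1) * a0)" if v: "v \<in> C1 k \<union> C2 k" for v
    proof -
      have "F k n (gG k n v) \<le> (R * Q) * F k (k+2) (gG k (k+2) v)" using B_iter[OF k v n2] prodB by simp
      also have "\<dots> \<le> (R * Q) * (real (k-1) * a0)" unfolding a0_def
        by (rule mult_left_mono[OF base_gG[OF k1 v]]) (use R0 Q0 in simp)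
      finally show ?thesis .
    qed
    let ?V = "C1 k \<union> C2 k"
    have cardV: "card ?V = 2 * k" unfolding C1_def C2_def by (subst card_Un_disjoint) auto
    let ?T = "{E. \<exists>s::nat. real s \<ge> c * real n powr (1 - 1 / real k) \<and> has_barrier k s (ktree_vertices k n) E}"
    have "measure_pmf.prob (ktree k n) ?T = F k n (\<lambda>E. if E \<in> ?T then 1 else 0)" by (rule prob_F[OF k1])
    also have "\<dots> \<ge> F k n (\<lambda>E. iG k n E - (\<Sum>v\<in>?V. real s * gG k n v E))"
      by (rule F_mono, rule pointwise[OF k n2 s1]) (use s_ge e_cc in simp)
    also have "F k n (\<lambda>E. iG k n E - (\<Sum>v\<in>?V. real s * gG k n v E)) = F k n (iG k n) - (\<Sum>v\<in>?V. real s * F k n (gG k n v))"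
      by (simp add: F_diff F_sum F_cmult)
    also have "\<dots> \<ge> R * a0 - (\<Sum>v\<in>?V. real s * (R * Q * (real (k-1) * a0)))"
      using A B by (intro diff_mono sum_mono mult_left_mono) auto
    also have "(\<Sum>v\<in>?V. real s * (R * Q * (real (k-1) * a0))) = R * a0 * (2 * K * (K - 1) * real s * Q)"
      using cardV k unfolding K_def by (simp add: of_nat_diff algebra_simps)
    finally have P1: "measure_pmf.prob (ktree k n) ?T \<ge> R * a0 * (1 - 2 * K * (K - 1) * real s * Q)"
      by (simp add: algebra_simps)
    have KK: "2 * K * (K - 1) \<ge> 0" using K2 by simp
    have "2 * K * (K - 1) * real s * Q \<le> 2 * K * (K - 1) * (2 * (c * real n powr cc)) * (Cq * real n powr (- cc))"
      by (intro mult_mono mult_left_mono s_le Qb) (use KK Q0 cp K2 in \<open>auto intro!: mult_nonneg_nonneg\<close>)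
    also have "\<dots> = 4 * K * (K - 1) * c * Cq * (real n powr cc * real n powr (- cc))" by (simp add: algebra_simps)
    also have "real n powr cc * real n powr (- cc) = 1" using npos by (simp add: powr_add[symmetric])
    also have "4 * K * (K - 1) * c * Cq * 1 = 1/2" unfolding c_def using K2 Cqp by (simp add: field_simps)
    finally have h: "2 * K * (K - 1) * real s * Q \<le> 1/2" .
    have "R * a0 * (1/2) \<le> R * a0 * (1 - 2 * K * (K - 1) * real s * Q)"
      by (rule mult_left_mono) (use h R0 a0p in auto)
    moreover have "c' * real n powr (1 / real k - real k) \<le> R * a0 * (1/2)"
      unfolding e_p c'_def using Rb a0p by (simp add: mult_right_mono)
    ultimately show "measure_pmf.prob (ktree k n) ?T \<ge> c' * real n powr (1 / real k - real k)"
      using P1 by linarith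
  qed
qed

end
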